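(* Let $d\ge1$, $\beta>0$, $\theta:[0,\infty)\to[0,\infty)$ continuous with $\theta(x)>0$ for $x>0$ and $h_\pm<\infty$; $\mu>0$ for bosons, $\mu\in\mathbb{R}$ for fermions. Let $\vec K^L\sim\mathcal{P}^L_\pm$ independently over $L$. For any $\epsilon>0$, almost surely $$\lim_{L\to\infty}\frac{1}{L^d}\#\Big\{\vec u\in B_{\vec1}(L): R^L_{\vec u}(\vec K^L)\le\Big(\frac{\log L\,(1-\epsilon)}{E^L_{\vec u}}\Big)^{1/d}\Big\}=0.$$
   Context: Put $q_{\vec n}^L=e^{-\beta(\theta(\|\vec n\|/L)+\mu)}$. Bosons: under $\mathcal{P}^L_+$ the $K_{\vec n}$, $\vec n\in\mathbb{Z}^d$, are independent with $\mathbb{P}(K_{\vec n}=k)=(1-q^L_{\vec n})(q^L_{\vec n})^k$, $k\ge0$. Fermions: independent $\{0,1\}$-valued with $\mathbb{P}(K_{\vec n}=1)=q^L_{\vec n}/(1+q^L_{\vec n})$. $h_\pm=\int_{\mathbb{R}^d}\big(\mp\log(1\mp e^{-\beta(\theta(\|\vec y\|)+\mu)})+\beta(\theta(\|\vec y\|)+\mu)\frac{e^{-\beta(\theta(\|\vec y\|)+\mu)}}{1\mp e^{-\beta(\theta(\|\vec y\|)+\mu)}}\big)d\vec y$. $E^L_{\vec u}$ is the Shannon entropy (natural log) of $K_{\vec u}$ under $\mathcal{P}^L_\pm$. $B_{\vec u}(s)=\{\vec n\in\mathbb{Z}^d:u_i\le n_i\le u_i+s-1\ \forall i\}$, $\vec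 k_{\vec u}(s)=(k_{\vec n})_{\vec n\in B_{\vec u}(s)}$, $R^L_{\vec u}(\vec k)=\inf\{s\ge1:\vec k_{\vec u}(s)\ne\vec k_{\vec v}(s)\ \forall\vec v\ne\vec u,\ \vec v\in B_{\vec1}(L)\}$. *)

theory Defs
  imports "HOL-Probability.Probability"
begin

text \<open>Lattice points of Z^d are \<open>int ^ 'd\<close>; d = CARD('d).\<close>

definition lat_norm :: "int ^ 'd \<Rightarrow> real" where
  "lat_norm n = norm ((\<chi> i. real_of_int (n $ i)) :: real ^ 'd)"

definition qpar :: "real \<Rightarrow> (real \<Rightarrow> real) \<Rightarrow> real \<Rightarrow> nat \<Rightarrow> int ^ 'd \<Rightarrow> real" where
  "qpar \<beta> \<theta> \<mu> L n = exp (- \<beta> * (\<theta> (lat_norm n / real L) + \<mu>))"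

text \<open>Law of a single occupation number K_n under P^L_+ (bos = True) or P^L_- (bos = False).\<close>
definition Kdist :: "bool \<Rightarrow> real \<Rightarrow> (real \<Rightarrow> real) \<Rightarrow> real \<Rightarrow> nat \<Rightarrow> int ^ 'd \<Rightarrow> nat pmf" where
  "Kdist bos \<beta> \<theta> \<mu> L n =
     (let q = qpar \<beta> \<theta> \<mu> L n in
      if bos then geometric_pmf (1 - q)
      else map_pmf (\<lambda>b. if b then 1 else 0) (bernoulli_pmf (q / (1 + q))))"

definition entropy_nat :: "nat pmf \<Rightarrow> real" where
  "entropy_nat p = (\<Sum>k. - (pmf p k * ln (pmf p k)))"

definition Ent :: "bool \<Rightarrow> real \<Rightarrow> (real \<Rightarrow> real) \<Rightarrow> real \<Rightarrow> nat \<Rightarrow> int ^ 'd \<Rightarrow> real" where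
  "Ent bos \<beta> \<theta> \<mu> L u = entropy_nat (Kdist bos \<beta> \<theta> \<mu> L u)"

text \<open>Integrand of h_+ (bos) / h_- (not bos), as a function of r = ||y||.\<close>
definition hdens :: "bool \<Rightarrow> real \<Rightarrow> (real \<Rightarrow> real) \<Rightarrow> real \<Rightarrow> real \<Rightarrow> real" where
  "hdens bos \<beta> \<theta> \<mu> r =
     (let x = \<beta> * (\<theta> r + \<mu>) in
      if bos then - ln (1 - exp (- x)) + x * exp (- x) / (1 - exp (- x))
      else ln (1 + exp (- x)) + x * exp (- x) / (1 + exp (- x)))"

definition Box :: "int ^ 'd \<Rightarrow> nat \<Rightarrow> (int ^ 'd) set" where
  "Box u s = {n. \<forall>i. u $ i \<le> n $ i \<and> n $ i \<le> u $ i + int s - 1}"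

definition pat_differ :: "(int ^ 'd \<Rightarrow> nat) \<Rightarrow> int ^ 'd \<Rightarrow> int ^ 'd \<Rightarrow> nat \<Rightarrow> bool" where
  "pat_differ k u v s \<longleftrightarrow> (\<exists>j \<in> Box 0 s. k (u + j) \<noteq> k (v + j))"

definition Rrec :: "nat \<Rightarrow> int ^ 'd \<Rightarrow> (int ^ 'd \<Rightarrow> nat) \<Rightarrow> ereal" where
  "Rrec L u k =
     (let S = {s::nat. s \<ge> 1 \<and> (\<forall>v \<in> Box 1 L. v \<noteq> u \<longrightarrow> pat_differ k u v s)} in
      if S = {} then \<infinity> else ereal (real (LEAST s. s \<in> S)))"

text \<open>Joint law: the fields K^L (L \<in> nat) are independent, each a product law over Z^d.\<close>
definition Pmodel :: "bool \<Rightarrow> real \<Rightarrow> (real \<Rightarrow> real) \<Rightarrow> real \<Rightarrow> (nat \<times> (int ^ 'd) \<Rightarrow> nat) measure" where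
  "Pmodel bos \<beta> \<theta> \<mu> = PiM UNIV (\<lambda>(L, n). measure_pmf (Kdist bos \<beta> \<theta> \<mu> L n))"

end

theory Submission
  imports Defs "HOL-Real_Asymp.Real_Asymp"
begin

lemma Box_bij:
  "bij_betw (\<lambda>f. \<chi> i. f i) (PiE UNIV (\<lambda>i. {u$i..u$i + int s - 1})) (Box u s)"
proof (rule bij_betwI')
  fix f g assume f: "f \<in> PiE UNIV (\<lambda>i. {u$i..u$i + int s - 1})" and g: "g \<in> PiE UNIV (\<lambda>i. {u$i..u$i + int s - 1})"
  show "((\<chi> i. f i) = (\<chi> i. g i)) = (f = g)"
    by (auto simp: vec_eq_iff fun_eq_iff)
next
  fix f assume "f \<in> PiE UNIV (\<lambda>i. {u$i..u$i + int s - 1})"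
  then show "(\<chi> i. f i) \<in> Box u s" by (auto simp: Box_def PiE_def Pi_def)
next
  fix n assume "n \<in> Box u s"
  then show "\<exists>f\<in>PiE UNIV (\<lambda>i. {u$i..u$i + int s - 1}). n = (\<chi> i. f i)"
    by (intro bexI[of _ "\<lambda>i. n $ i"]) (auto simp: Box_def vec_eq_iff)
qed

lemma Box_finite: "finite (Box u s)"
  using bij_betw_finite[OF Box_bij[of u s]] by (simp add: finite_PiE)

lemma Box_card: "card (Box (u::int^'d) s) = s ^ CARD('d)"
proof -
  have "card (Box u s) = card (PiE (UNIV::'d set) (\<lambda>i. {u$i..u$i + int s - 1}))"
    using bij_betw_same_card[OF Box_bij[of u s]] by simp
  also have "\<dots> = (\<Prod>i\<in>(UNIV::'d set). card {u$i..u$i + int s - 1})"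
    by (simp add: card_PiE)
  also have "\<dots> = (\<Prod>i\<in>(UNIV::'d set). s)"
    by simp
  finally show ?thesis by simp
qed

lemma Box_mono: "s \<le> s' \<Longrightarrow> Box u s \<subseteq> Box u s'"
  by (auto simp: Box_def) (smt (verit) of_nat_le_iff)

lemma pat_differ_mono: "pat_differ k u v s \<Longrightarrow> s \<le> s' \<Longrightarrow> pat_differ k u v s'"
  unfolding pat_differ_def using Box_mono by blast

lemma Rrec_le_unique:
  assumes "Rrec L u k \<le> ereal t"
  shows "\<exists>s. 1 \<le> s \<and> real s \<le> t \<and> (\<forall>v\<in>Box 1 L. v \<noteq> u \<longrightarrow> pat_differ k u v s)"
proof -
  define S where "S = {s::nat. s \<ge> 1 \<and> (\<forall>v \<in> Box 1 L. v \<noteq> u \<longrightarrow> pat_differ k u v s)}"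
  have R: "Rrec L u k = (if S = {} then \<infinity> else ereal (real (LEAST s. s \<in> S)))"
    unfolding Rrec_def S_def Let_def by simp
  show ?thesis
  proof (cases "S = {}")
    case True then show ?thesis using assms R by simp
  next
    case False
    then obtain s0 where "s0 \<in> S" by auto
    hence L: "(LEAST s. s \<in> S) \<in> S" by (rule LeastI)
    from False R assms have "real (LEAST s. s \<in> S) \<le> t" by simp
    with L show ?thesis unfolding S_def by blast
  qed
qed

lemma Rrec_le_unique_floor:
  assumes "Rrec L u k \<le> ereal t"
  shows "1 \<le> nat \<lfloor>t\<rfloor> \<and> (\<forall>v\<in>Box 1 L. v \<noteq> u \<longrightarrow> pat_differ k u v (nat \<lfloor>t\<rfloor>))"
proof -
  obtain s where s: "1 \<le> s" "real s \<le> t" "\<forall>v\<in>Box 1 L. v \<noteq> u \<longrightarrow> pat_differ k u v s"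
    using Rrec_le_unique[OF assms] by blast
  have "s \<le> nat \<lfloor>t\<rfloor>" using s(2) by linarith
  then show ?thesis using s pat_differ_mono by (meson order_trans)
qed

lemma lat_norm_nonneg: "0 \<le> lat_norm n"
  by (simp add: lat_norm_def)

lemma lat_norm_l1: "lat_norm (n::int^'d) \<le> (\<Sum>i\<in>UNIV. \<bar>real_of_int (n$i)\<bar>)"
  unfolding lat_norm_def using norm_le_l1_cart[of "(\<chi> i. real_of_int (n $ i)) :: real^'d"] by simp

lemma lat_norm_bound:
  assumes "\<And>i. \<bar>n $ i\<bar> \<le> M"
  shows "lat_norm (n::int^'d) \<le> real CARD('d) * M"
proof -
  have "lat_norm n \<le> (\<Sum>i\<in>UNIV. \<bar>real_of_int (n$i)\<bar>)" by (rule lat_norm_l1)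
  also have "\<dots> \<le> (\<Sum>i\<in>(UNIV::'d set). real_of_int M)"
    by (intro sum_mono) (metis assms of_int_abs of_int_le_iff)
  finally show ?thesis by simp
qed

lemma lat_norm_diff: "\<bar>lat_norm (n::int^'d) - lat_norm m\<bar> \<le> lat_norm (n - m)"
proof -
  have "(\<chi> i. real_of_int ((n - m) $ i)) = ((\<chi> i. real_of_int (n $ i)) - (\<chi> i. real_of_int (m $ i)) :: real^'d)"
    by (simp add: vec_eq_iff)
  then show ?thesis unfolding lat_norm_def by (simp add: norm_triangle_ineq3)
qed

lemma sum_prod_pmf_le1:
  fixes p :: "nat pmf" and F :: "('j \<Rightarrow> nat) set"
  assumes "finite J" "finite F" "F \<subseteq> extensional J"
  shows "(\<Sum>x\<in>F. \<Prod>j\<in>J. pmf p (x j)) \<le> 1"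
proof -
  define M where "M = Max (insert 0 {x j |x j. x \<in> F \<and> j \<in> J})"
  have fin: "finite {x j |x j. x \<in> F \<and> j \<in> J}"
  proof -
    have "{x j |x j. x \<in> F \<and> j \<in> J} = (\<lambda>(x,j). x j) ` (F \<times> J)" by auto
    then show ?thesis using assms by simp
  qed
  have sub: "F \<subseteq> PiE J (\<lambda>_. {..M})"
  proof
    fix x assume x: "x \<in> F"
    have "x j \<le> M" if "j \<in> J" for j
      unfolding M_def using x that fin by (intro Max_ge) auto
    then show "x \<in> PiE J (\<lambda>_. {..M})" using x assms(3) by (auto simp: PiE_def)
  qed
  have "(\<Sum>x\<in>F. \<Prod>j\<in>J. pmf p (x j)) \<le> (\<Sum>x\<in>PiE J (\<lambda>_. {..M}). \<Prod>j\<in>J. pmf p (x j))"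
    by (rule sum_mono2) (use sub assms in \<open>auto simp: finite_PiE prod_nonneg\<close>)
  also have "\<dots> = (\<Prod>j\<in>J. \<Sum>k\<in>{..M}. pmf p k)"
    by (subst prod_sum_PiE) (use assms in auto)
  also have "\<dots> \<le> (\<Prod>j\<in>J. 1)"
  proof (rule prod_mono)
    fix j assume "j \<in> J"
    have "(\<Sum>k\<in>{..M}. pmf p k) = measure_pmf.prob p {..M}"
      by (simp add: measure_measure_pmf_finite)
    then show "0 \<le> (\<Sum>k\<in>{..M}. pmf p k) \<and> (\<Sum>k\<in>{..M}. pmf p k) \<le> 1"
      by (simp add: sum_nonneg)
  qed
  finally show ?thesis by simp
qed

lemma count_by_keys:
  fixes key :: "'u \<Rightarrow> 'k" and pat :: "'u \<Rightarrow> 'x"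
  assumes "finite U" "finite K" "inj_on (\<lambda>u. (key u, pat u)) U" "\<And>u. u \<in> U \<Longrightarrow> key u \<in> K"
    and "\<And>u. u \<in> U \<Longrightarrow> Q (key u) (pat u) \<ge> \<tau>" "\<tau> > 0"
    and "\<And>k G. k \<in> K \<Longrightarrow> finite G \<Longrightarrow> G \<subseteq> pat ` {u\<in>U. key u = k} \<Longrightarrow> (\<Sum>x\<in>G. Q k x) \<le> 1"
    and "\<And>k x. Q k x \<ge> 0"
  shows "real (card U) \<le> real (card K) / \<tau>"
proof -
  have "real (card U) \<le> (\<Sum>k\<in>K. real (card {u\<in>U. key u = k}))"
  proof -
    have e: "U = (\<Union>k\<in>K. {u\<in>U. key u = k})" using assms(4) by blast
    have "card (\<Union>k\<in>K. {u\<in>U. key u = k}) \<le> (\<Sum>k\<in>K. card {u\<in>U. key u = k})"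
      by (rule card_UN_le[OF assms(2)])
    then have "card U \<le> (\<Sum>k\<in>K. card {u\<in>U. key u = k})"
      using e by simp
    then show ?thesis by (simp flip: of_nat_sum)
  qed
  also have "\<dots> \<le> (\<Sum>k\<in>K. 1 / \<tau>)"
  proof (rule sum_mono)
    fix k assume k: "k \<in> K"
    let ?Uk = "{u\<in>U. key u = k}"
    have inj: "inj_on pat ?Uk"
      using assms(3) unfolding inj_on_def by blast
    have "real (card ?Uk) * \<tau> = (\<Sum>u\<in>?Uk. \<tau>)" by simp
    also have "\<dots> \<le> (\<Sum>u\<in>?Uk. Q k (pat u))"
      by (rule sum_mono) (use assms(5) in auto)
    also have "\<dots> = (\<Sum>x\<in>pat ` ?Uk. Q k x)"
      by (rule sum.reindex[OF inj, symmetric, unfolded comp_def])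
    also have "\<dots> \<le> 1"
      by (rule assms(7)[OF k]) (use assms(1) in auto)
    finally show "real (card ?Uk) \<le> 1 / \<tau>"
      using assms(6) by (simp add: field_simps)
  qed
  finally show ?thesis by simp
qed

definition pK :: "bool \<Rightarrow> real \<Rightarrow> nat pmf" where
  "pK bos q = (if bos then geometric_pmf (1 - q)
     else map_pmf (\<lambda>b. if b then 1 else 0) (bernoulli_pmf (q / (1 + q))))"

lemma Kdist_pK: "Kdist bos \<beta> \<theta> \<mu> L n = pK bos (qpar \<beta> \<theta> \<mu> L n)"
  by (simp add: Kdist_def pK_def Let_def)

definition qdom :: "bool \<Rightarrow> real \<Rightarrow> bool" where
  "qdom bos q \<longleftrightarrow> 0 < q \<and> (bos \<longrightarrow> q < 1)"
definition al :: "bool \<Rightarrow> real \<Rightarrow> real" where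
  "al bos q = (if bos then - ln (1 - q) else ln (1 + q))"
definition bb :: "real \<Rightarrow> real" where "bb q = - ln q"
definition mm :: "bool \<Rightarrow> real \<Rightarrow> real" where
  "mm bos q = (if bos then q / (1 - q) else q / (1 + q))"
definition VV :: "bool \<Rightarrow> real \<Rightarrow> real" where
  "VV bos q = (if bos then (1 + q) / (1 - q)^2 else 1)"
definition Aq :: "bool \<Rightarrow> real \<Rightarrow> real \<Rightarrow> real" where
  "Aq bos q c = al bos c + bb c * mm bos q"
definition insupp :: "bool \<Rightarrow> nat \<Rightarrow> bool" where
  "insupp bos k \<longleftrightarrow> bos \<or> k \<le> 1"

lemma pmf_fermion:
  fixes k :: nat
  assumes "0 < q"
  shows "pmf (map_pmf (\<lambda>b. if b then 1 else 0) (bernoulli_pmf (q / (1 + q)))) k =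
     (if k = 0 then 1 / (1 + q) else if k = 1 then q / (1 + q) else (0::real))"
proof -
  have p: "0 \<le> q / (1 + q)" "q / (1 + q) \<le> 1" using assms by auto
  have "pmf (map_pmf (\<lambda>b. if b then 1 else 0) (bernoulli_pmf (q / (1 + q)))) k =
        measure_pmf.prob (bernoulli_pmf (q / (1 + q))) ((\<lambda>b. if b then 1 else (0::nat)) -` {k})"
    by (rule pmf_map)
  also have "\<dots> = (if k = 0 then 1 / (1 + q) else if k = 1 then q / (1 + q) else 0)"
  proof -
    have "(\<lambda>b. if b then 1 else (0::nat)) -` {k} = (if k = 0 then {False} else if k = 1 then {True} else {})"
    proof (cases "k = 0")
      case True then show ?thesis by auto
    next
      case False
      show ?thesis
      proof (cases "k = 1")
        case True
        have "(\<lambda>b. if b then 1 else (0::nat)) -` {k} = {True}"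
          using True by (auto simp: set_eq_iff split: if_splits)
        then show ?thesis using True by simp
      next
        case k1: False
        have "(\<lambda>b. if b then 1 else (0::nat)) -` {k} = {}"
          using False k1 by (auto simp: set_eq_iff split: if_splits)
        then show ?thesis using False k1 by simp
      qed
    qed
    then show ?thesis using p assms
      by (auto simp: measure_pmf_single pmf_bernoulli_True pmf_bernoulli_False field_simps)
  qed
  finally show ?thesis .
qed

lemma pmf_pK:
  assumes "qdom bos q"
  shows "pmf (pK bos q) k = (if insupp bos k then exp (- (al bos q + bb q * real k)) else 0)"
proof (cases bos)
  case True
  then have q: "0 < q" "q < 1" using assms by (auto simp: qdom_def)
  have "exp (- (al bos q + bb q * real k)) = exp (ln (1 - q)) * exp (ln q * real k)"
    using True by (simp add: al_def bb_def exp_add[symmetric] algebra_simps)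
  also have "\<dots> = (1 - q) * q ^ k"
  proof -
    have "exp (ln q * real k) = exp (ln q) ^ k" by (metis exp_of_nat2_mult)
    then show ?thesis using q by simp
  qed
  finally show ?thesis using True q by (simp add: pK_def insupp_def mult.commute)
next
  case False
  then have q: "0 < q" using assms by (auto simp: qdom_def)
  have e0: "exp (- ln (1 + q)) = 1 / (1 + q)" using q by (simp add: exp_minus divide_inverse)
  have e1: "exp (- (ln (1 + q) + - ln q)) = q / (1 + q)"
    using q by (simp add: exp_minus exp_add exp_diff field_simps)
  show ?thesis using False q e0 e1
    by (cases "k = 0"; cases "k = 1") (auto simp: pK_def pmf_fermion insupp_def al_def bb_def)
qed

lemma pmf_pK_pos: "qdom bos q \<Longrightarrow> insupp bos k \<Longrightarrow> pmf (pK bos q) k > 0"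
  by (simp add: pmf_pK)

lemma pmf_pK_zero: "qdom bos q \<Longrightarrow> \<not> insupp bos k \<Longrightarrow> pmf (pK bos q) k = 0"
  by (simp add: pmf_pK)

lemma prob_not_insupp: "qdom bos q \<Longrightarrow> measure_pmf.prob (pK bos q) {k. \<not> insupp bos k} = 0"
  by (subst measure_pmf_zero_iff) (auto simp: set_pmf_eq pmf_pK_zero)

lemma geometric_sums_times_Suc2:
  fixes c :: real assumes "\<bar>c\<bar> < 1"
  shows "(\<lambda>n. (real n + 1)^2 * c ^ n) sums ((1 + c) / (1 - c)^3)"
proof -
  have s: "(\<lambda>n. real n * z ^ n) sums (z / (1 - z)\<^sup>2)" if "norm z < 1" for z :: real
    using geometric_sums_times_n[of z] that by (simp add: mult.commute)
  have d: "((\<lambda>z. z / (1 - z)\<^sup>2) has_field_derivative ((1 + c) / (1 - c)^3)) (at c)"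
  proof -
    have "c \<noteq> 1" using assms by auto
    then have "((\<lambda>z. z / (1 - z)\<^sup>2) has_field_derivative ((1 * (1 - c)\<^sup>2 - c * (2 * (1 - c) * (-1))) / ((1 - c)\<^sup>2)\<^sup>2)) (at c)"
      by (auto intro!: derivative_eq_intros)
    moreover have "(1 * (1 - c)\<^sup>2 - c * (2 * (1 - c) * (-1))) / ((1 - c)\<^sup>2)\<^sup>2 = (1 + c) / (1 - c)^3"
    proof -
      have e: "(1 * (1 - c)\<^sup>2 - c * (2 * (1 - c) * (-1))) = (1+c)*(1-c)" by (simp add: power2_eq_square algebra_simps)
      have f: "((1 - c)\<^sup>2)\<^sup>2 = (1-c)^3 * (1-c)" by (simp add: power2_eq_square power3_eq_cube)
      have nz: "1 - c \<noteq> 0" using \<open>c \<noteq> 1\<close> by simp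
      show ?thesis unfolding e f using nz by simp
    qed
    ultimately show ?thesis by simp
  qed
  have "(\<lambda>n. diffs (\<lambda>n. real n) n * c ^ n) sums ((1 + c) / (1 - c)^3)"
    by (rule termdiffs_sums_strong[of 1 "\<lambda>n. real n" "\<lambda>z. z / (1 - z)\<^sup>2", OF s d]) (use assms in auto)
  then show ?thesis by (simp add: diffs_def power2_eq_square algebra_simps)
qed

lemma pmf_expect_summable:
  fixes p :: "nat pmf" and f :: "nat \<Rightarrow> real"
  assumes "summable (\<lambda>n. pmf p n * f n)" "\<And>n. f n \<ge> 0"
  shows "integrable (measure_pmf p) f" "measure_pmf.expectation p f = (\<Sum>n. pmf p n * f n)"
proof -
  have "integrable (count_space UNIV) (\<lambda>n. pmf p n * f n)"
    unfolding integrable_count_space_nat_iff using assms by (simp add: abs_mult)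
  then show "integrable (measure_pmf p) f"
    unfolding measure_pmf_eq_density by (subst integrable_density) (auto simp: mult_ac)
  have "measure_pmf.expectation p f = (\<integral>n. pmf p n * f n \<partial>count_space UNIV)"
    unfolding measure_pmf_eq_density by (subst integral_density) auto
  also have "\<dots> = (\<Sum>n. pmf p n * f n)"
    using \<open>integrable (count_space UNIV) (\<lambda>n. pmf p n * f n)\<close> by (rule integral_count_space_nat)
  finally show "measure_pmf.expectation p f = (\<Sum>n. pmf p n * f n)" .
qed

lemma pK_boson_pmf: "0 < q \<Longrightarrow> q < 1 \<Longrightarrow> pmf (pK True q) k = (1 - q) * q ^ k"
  by (simp add: pK_def)

lemma ent_pK:
  assumes "qdom bos q"
  shows "entropy_nat (pK bos q) = Aq bos q q"
proof -
  have tm: "- (pmf (pK bos q) k * ln (pmf (pK bos q) k)) =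
      (if insupp bos k then pmf (pK bos q) k * (al bos q + bb q * real k) else 0)" for k
    using assms by (simp add: pmf_pK algebra_simps)
  show ?thesis
  proof (cases bos)
    case True
    then have q: "0 < q" "q < 1" using assms by (auto simp: qdom_def)
    have s1: "(\<lambda>k. (1 - q) * al bos q * q ^ k) sums ((1 - q) * al bos q * (1 / (1 - q)))"
      by (intro sums_mult geometric_sums) (use q in auto)
    have s2: "(\<lambda>k. (1 - q) * bb q * (q ^ k * real k)) sums ((1 - q) * bb q * (q / (1 - q)\<^sup>2))"
      by (intro sums_mult geometric_sums_times_n) (use q in auto)
    have "(\<lambda>k. (1 - q) * al bos q * q ^ k + (1 - q) * bb q * (q ^ k * real k)) sums
          ((1 - q) * al bos q * (1 / (1 - q)) + (1 - q) * bb q * (q / (1 - q)\<^sup>2))"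
      by (rule sums_add[OF s1 s2])
    moreover have "(\<lambda>k. (1 - q) * al bos q * q ^ k + (1 - q) * bb q * (q ^ k * real k)) =
        (\<lambda>k. - (pmf (pK bos q) k * ln (pmf (pK bos q) k)))"
    proof
      fix k
      have "- (pmf (pK bos q) k * ln (pmf (pK bos q) k)) = pmf (pK bos q) k * (al bos q + bb q * real k)"
        using tm[of k] True by (simp add: insupp_def)
      also have "\<dots> = (1 - q) * q ^ k * (al bos q + bb q * real k)"
        using True q by (simp add: pK_boson_pmf)
      finally show "(1 - q) * al bos q * q ^ k + (1 - q) * bb q * (q ^ k * real k) =
          - (pmf (pK bos q) k * ln (pmf (pK bos q) k))" by (simp add: algebra_simps)
    qed
    moreover have "(1 - q) * al bos q * (1 / (1 - q)) + (1 - q) * bb q * (q / (1 - q)\<^sup>2) = Aq bos q q"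
    proof -
      have nz: "1 - q \<noteq> 0" using q by simp
      have "(1 - q) * bb q * (q / (1 - q)\<^sup>2) = bb q * (q / (1 - q))"
        using nz by (simp add: power2_eq_square)
      moreover have "(1 - q) * al bos q * (1 / (1 - q)) = al bos q" using nz by simp
      ultimately show ?thesis using True by (simp add: Aq_def mm_def)
    qed
    ultimately show ?thesis unfolding entropy_nat_def by (simp add: sums_iff)
  next
    case False
    have "(\<lambda>k. - (pmf (pK bos q) k * ln (pmf (pK bos q) k))) sums
          (\<Sum>k\<in>{0,1}. - (pmf (pK bos q) k * ln (pmf (pK bos q) k)))"
    proof (rule sums_finite)
      fix k :: nat assume "k \<notin> {0,1}"
      then have "\<not> insupp bos k" using False by (auto simp: insupp_def)
      then show "- (pmf (pK bos q) k * ln (pmf (pK bos q) k)) = 0" using tm[of k] by simp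
    qed simp
    moreover have "(\<Sum>k\<in>{0::nat,1}. - (pmf (pK bos q) k * ln (pmf (pK bos q) k))) = Aq bos q q"
    proof -
      have q: "0 < q" using assms by (simp add: qdom_def)
      have "(\<Sum>k\<in>{0::nat,1}. - (pmf (pK bos q) k * ln (pmf (pK bos q) k))) =
            pmf (pK bos q) 0 * al bos q + pmf (pK bos q) 1 * (al bos q + bb q)"
        using False tm[of 0] tm[of 1] by (simp add: insupp_def)
      also have "\<dots> = Aq bos q q"
      proof -
        have one: "1 / (1 + q) + q / (1 + q) = 1" using q by (simp add: add_divide_distrib[symmetric])
        have "1 / (1 + q) * al bos q + q / (1 + q) * (al bos q + bb q) =
              (1 / (1 + q) + q / (1 + q)) * al bos q + bb q * (q / (1 + q))"
          by (simp add: algebra_simps)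
        then show ?thesis using False q one by (simp add: pK_def pmf_fermion Aq_def mm_def)
      qed
      finally show ?thesis .
    qed
    ultimately show ?thesis unfolding entropy_nat_def by (simp add: sums_iff)
  qed
qed

lemma mom1_pK:
  assumes "qdom bos q"
  shows "integrable (measure_pmf (pK bos q)) real" "measure_pmf.expectation (pK bos q) real = mm bos q"
proof -
  have "integrable (measure_pmf (pK bos q)) real \<and> measure_pmf.expectation (pK bos q) real = mm bos q"
  proof (cases bos)
    case True
    then have q: "0 < q" "q < 1" using assms by (auto simp: qdom_def)
    have "integrable (measure_pmf (geometric_pmf (1 - q))) real"
      by (rule integrable_real_geometric_pmf) (use q in auto)
    moreover have "measure_pmf.expectation (geometric_pmf (1 - q)) real = q / (1 - q)"
      using expectation_geometric_pmf[of "1 - q"] q by simp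
    ultimately show ?thesis using True by (simp add: pK_def mm_def)
  next
    case False
    then have q: "0 < q" using assms by (auto simp: qdom_def)
    have p: "0 \<le> q / (1 + q)" "q / (1 + q) \<le> 1" using q by auto
    have "integrable (measure_pmf (pK bos q)) real"
      using False by (simp add: pK_def integrable_measure_pmf_finite)
    moreover have "measure_pmf.expectation (pK bos q) real = q / (1 + q)"
      using False p by (simp add: pK_def integral_map_pmf integral_bernoulli_pmf)
    ultimately show ?thesis using False by (simp add: mm_def)
  qed
  then show "integrable (measure_pmf (pK bos q)) real" "measure_pmf.expectation (pK bos q) real = mm bos q"
    by auto
qed

lemma mom2_pK:
  assumes "qdom bos q"
  shows "integrable (measure_pmf (pK bos q)) (\<lambda>k. (real k)\<^sup>2)"
    "measure_pmf.expectation (pK bos q) (\<lambda>k. (real k)\<^sup>2) \<le> VV bos q"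
proof -
  have "integrable (measure_pmf (pK bos q)) (\<lambda>k. (real k)\<^sup>2) \<and>
        measure_pmf.expectation (pK bos q) (\<lambda>k. (real k)\<^sup>2) \<le> VV bos q"
  proof (cases bos)
    case True
    then have q: "0 < q" "q < 1" using assms by (auto simp: qdom_def)
    have S: "(\<lambda>n. (1 - q) * ((real n + 1)^2 * q ^ n)) sums ((1 - q) * ((1 + q) / (1 - q)^3))"
      by (intro sums_mult geometric_sums_times_Suc2) (use q in auto)
    have le: "pmf (pK bos q) n * (real n)\<^sup>2 \<le> (1 - q) * ((real n + 1)^2 * q ^ n)" for n
      using True q by (simp add: pK_boson_pmf power_mono mult_left_mono mult_right_mono)
    have nn: "0 \<le> pmf (pK bos q) n * (real n)\<^sup>2" for n by simp
    have sm: "summable (\<lambda>n. pmf (pK bos q) n * (real n)\<^sup>2)"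
      by (rule summable_comparison_test[OF _ sums_summable[OF S]]) (use le nn in auto)
    note R = pmf_expect_summable[OF sm]
    have "(\<Sum>n. pmf (pK bos q) n * (real n)\<^sup>2) \<le> (\<Sum>n. (1 - q) * ((real n + 1)^2 * q ^ n))"
      by (rule suminf_le[OF le sm sums_summable[OF S]])
    also have "\<dots> = (1 - q) * ((1 + q) / (1 - q)^3)" using S by (simp add: sums_iff)
    also have "\<dots> = VV bos q"
    proof -
      have nz: "1 - q \<noteq> 0" using q by simp
      have "(1 - q)^3 = (1 - q) * (1 - q)^2" by (simp add: power2_eq_square power3_eq_cube)
      then show ?thesis using True nz by (simp add: VV_def)
    qed
    finally show ?thesis using R by simp
  next
    case False
    then have q: "0 < q" using assms by (auto simp: qdom_def)
    have p: "0 \<le> q / (1 + q)" "q / (1 + q) \<le> 1" using q by auto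
    have "integrable (measure_pmf (pK bos q)) (\<lambda>k. (real k)\<^sup>2)"
      using False by (simp add: pK_def integrable_measure_pmf_finite)
    moreover have "measure_pmf.expectation (pK bos q) (\<lambda>k. (real k)\<^sup>2) = q / (1 + q)"
      using False p by (simp add: pK_def integral_map_pmf integral_bernoulli_pmf)
    ultimately show ?thesis using False p by (simp add: VV_def)
  qed
  then show "integrable (measure_pmf (pK bos q)) (\<lambda>k. (real k)\<^sup>2)"
    "measure_pmf.expectation (pK bos q) (\<lambda>k. (real k)\<^sup>2) \<le> VV bos q" by auto
qed

locale setting =
  fixes bos :: bool and \<beta> \<mu> :: real and \<theta> :: "real \<Rightarrow> real"
  assumes beta: "\<beta> > 0" and cont: "continuous_on {0..} \<theta>"
    and th_nonneg: "\<forall>x\<ge>0. \<theta> x \<ge> 0" and bosmu: "bos \<Longrightarrow> \<mu> > 0"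
begin

definition gq :: "real \<Rightarrow> real" where "gq r = exp (- \<beta> * (\<theta> r + \<mu>))"

lemma gq_pos: "gq r > 0" by (simp add: gq_def)

lemma gq_qdom: assumes "r \<ge> 0" shows "qdom bos (gq r)"
proof -
  have "bos \<Longrightarrow> gq r < 1"
  proof -
    assume b: bos
    have "\<theta> r + \<mu> > 0" using th_nonneg assms bosmu[OF b] by force
    then have "- \<beta> * (\<theta> r + \<mu>) < 0" using beta by (simp add: mult_pos_pos)
    then show "gq r < 1" by (simp add: gq_def)
  qed
  then show ?thesis by (simp add: qdom_def gq_pos)
qed

lemma gq_lt1: "bos \<Longrightarrow> r \<ge> 0 \<Longrightarrow> gq r < 1"
  using gq_qdom by (simp add: qdom_def)

lemma gq_cont: "continuous_on {0..} gq"
  unfolding gq_def by (intro continuous_intros cont)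

lemma qpar_gq: "qpar \<beta> \<theta> \<mu> L n = gq (lat_norm n / real L)"
  by (simp add: qpar_def gq_def)

lemma Ent_eq: "Ent bos \<beta> \<theta> \<mu> L u = Aq bos (gq (lat_norm u / real L)) (gq (lat_norm u / real L))"
proof -
  have "lat_norm u / real L \<ge> 0" by (simp add: lat_norm_nonneg)
  then show ?thesis
    by (simp add: Ent_def Kdist_pK qpar_gq ent_pK gq_qdom)
qed

lemma Kdist_gq: "Kdist bos \<beta> \<theta> \<mu> L n = pK bos (gq (lat_norm n / real L))"
  by (simp add: Kdist_pK qpar_gq)

lemma Aq_pos: assumes "qdom bos q" shows "Aq bos q q > 0"
proof (cases bos)
  case True
  then have q: "0 < q" "q < 1" using assms by (auto simp: qdom_def)
  have "al bos q > 0" using True q by (simp add: al_def)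
  moreover have "bb q > 0" using q by (simp add: bb_def)
  moreover have "mm bos q > 0" using True q by (simp add: mm_def)
  ultimately show ?thesis by (simp add: Aq_def add_pos_pos mult_pos_pos)
next
  case False
  then have q: "0 < q" using assms by (auto simp: qdom_def)
  have "Aq bos q q = ln (1 + q) / (1 + q) + q / (1 + q) * (ln (1 + q) - ln q)"
  proof -
    have one: "1 / (1 + q) + q / (1 + q) = 1" using q by (simp add: add_divide_distrib[symmetric])
    have "ln (1 + q) / (1 + q) + q / (1 + q) * (ln (1 + q) - ln q) =
          (1 / (1 + q) + q / (1 + q)) * ln (1 + q) + (- ln q) * (q / (1 + q))"
      by (simp add: algebra_simps)
    then show ?thesis using one False by (simp add: Aq_def al_def bb_def mm_def)
  qed
  moreover have "ln (1 + q) / (1 + q) > 0" using q by simp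
  moreover have "q / (1 + q) * (ln (1 + q) - ln q) > 0" using q by simp
  ultimately show ?thesis by linarith
qed

lemma Ar_cont:
  "continuous_on ({0..R1} \<times> {0..R1}) (\<lambda>x. Aq bos (gq (fst x)) (gq (snd x)))"
proof -
  let ?S = "{0..R1} \<times> {0..R1}"
  have c1: "continuous_on ?S (\<lambda>x. gq (fst x))"
    by (rule continuous_on_compose2[OF gq_cont continuous_on_fst]) auto
  have c2: "continuous_on ?S (\<lambda>x. gq (snd x))"
    by (rule continuous_on_compose2[OF gq_cont continuous_on_snd]) auto
  have p1: "\<forall>x\<in>?S. gq (fst x) \<noteq> 0" "\<forall>x\<in>?S. gq (snd x) \<noteq> 0" by (auto simp: gq_def)
  have p1': "\<forall>x\<in>?S. 1 + gq (fst x) \<noteq> 0" "\<forall>x\<in>?S. 1 + gq (snd x) \<noteq> 0"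
    using gq_pos by (smt (verit))+
  show ?thesis
  proof (cases bos)
    case True
    have p2: "\<forall>x\<in>?S. 1 - gq (fst x) \<noteq> 0" "\<forall>x\<in>?S. 1 - gq (snd x) \<noteq> 0"
      using gq_lt1[OF True] by (force, force)
    have "continuous_on ?S (\<lambda>x. - ln (1 - gq (snd x)) + - ln (gq (snd x)) * (gq (fst x) / (1 - gq (fst x))))"
      by (intro continuous_intros c1 c2 continuous_on_ln p1 p2)
    then show ?thesis using True by (simp add: Aq_def al_def bb_def mm_def)
  next
    case False
    have "continuous_on ?S (\<lambda>x. ln (1 + gq (snd x)) + - ln (gq (snd x)) * (gq (fst x) / (1 + gq (fst x))))"
      by (intro continuous_intros c1 c2 continuous_on_ln p1 p1')
    then show ?thesis using False by (simp add: Aq_def al_def bb_def mm_def)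
  qed
qed

lemma Er_cont: "continuous_on {0..R1} (\<lambda>r. Aq bos (gq r) (gq r))"
proof -
  have "continuous_on {0..R1} ((\<lambda>x. Aq bos (gq (fst x)) (gq (snd x))) \<circ> (\<lambda>r. (r, r)))"
    by (rule continuous_on_compose) (auto intro!: continuous_intros continuous_on_subset[OF Ar_cont[of R1]])
  then show ?thesis by (simp add: comp_def)
qed

lemma Emin_ex: assumes "R1 \<ge> 0" shows "\<exists>Emin>0. \<forall>r\<in>{0..R1}. Aq bos (gq r) (gq r) \<ge> Emin"
proof -
  obtain r0 where r0: "r0 \<in> {0..R1}" "\<forall>r\<in>{0..R1}. Aq bos (gq r0) (gq r0) \<le> Aq bos (gq r) (gq r)"
    using continuous_attains_inf[OF compact_Icc _ Er_cont[of R1]] assms by auto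
  have "Aq bos (gq r0) (gq r0) > 0" using r0 by (intro Aq_pos gq_qdom) auto
  then show ?thesis using r0 by blast
qed

lemma Bmax_ex: "\<exists>B. \<forall>r\<in>{0..R1}. (bb (gq r))\<^sup>2 * VV bos (gq r) \<le> B"
proof (cases "R1 \<ge> 0")
  case True
  have c: "continuous_on {0..R1} (\<lambda>r. (bb (gq r))\<^sup>2 * VV bos (gq r))"
  proof (cases bos)
    case b: True
    have p: "\<forall>r\<in>{0..R1}. gq r \<noteq> 0" "\<forall>r\<in>{0..R1}. (1 - gq r)^2 \<noteq> 0"
      using gq_lt1[OF b] by (force simp: gq_def, force)
    have "continuous_on {0..R1} (\<lambda>r. (- ln (gq r))\<^sup>2 * ((1 + gq r) / (1 - gq r)^2))"
      by (intro continuous_intros continuous_on_subset[OF gq_cont] continuous_on_ln p) auto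
    then show ?thesis using b by (simp add: bb_def VV_def)
  next
    case b: False
    have p: "\<forall>r\<in>{0..R1}. gq r \<noteq> 0" by (simp add: gq_def)
    have "continuous_on {0..R1} (\<lambda>r. (- ln (gq r))\<^sup>2 * 1)"
      by (intro continuous_intros continuous_on_subset[OF gq_cont] continuous_on_ln p) auto
    then show ?thesis using b by (simp add: bb_def VV_def)
  qed
  obtain r0 where r0: "r0 \<in> {0..R1}" "\<forall>r\<in>{0..R1}. (bb (gq r))\<^sup>2 * VV bos (gq r) \<le> (bb (gq r0))\<^sup>2 * VV bos (gq r0)"
    using continuous_attains_sup[OF compact_Icc _ c] True by auto
  then show ?thesis by blast
next
  case False then show ?thesis by auto
qed

lemma Bmax2_ex: "\<exists>B. \<forall>r1\<in>{0..R1}. \<forall>r2\<in>{0..R1}. (bb (gq r1))\<^sup>2 * VV bos (gq r2) \<le> B"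
proof (cases "R1 \<ge> 0")
  case True
  let ?S = "{0..R1} \<times> {0..R1}"
  have c1: "continuous_on ?S (\<lambda>x. gq (fst x))"
    by (rule continuous_on_compose2[OF gq_cont continuous_on_fst]) auto
  have c2: "continuous_on ?S (\<lambda>x. gq (snd x))"
    by (rule continuous_on_compose2[OF gq_cont continuous_on_snd]) auto
  have p1: "\<forall>x\<in>?S. gq (fst x) \<noteq> 0" by (auto simp: gq_def)
  have c: "continuous_on ?S (\<lambda>x. (bb (gq (fst x)))\<^sup>2 * VV bos (gq (snd x)))"
  proof (cases bos)
    case b: True
    have p: "\<forall>x\<in>?S. (1 - gq (snd x))^2 \<noteq> 0"
      using gq_lt1[OF b] by force
    have "continuous_on ?S (\<lambda>x. (- ln (gq (fst x)))\<^sup>2 * ((1 + gq (snd x)) / (1 - gq (snd x))^2))"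
      by (intro continuous_intros c1 c2 continuous_on_ln p1 p)
    then show ?thesis using b by (simp add: bb_def VV_def)
  next
    case b: False
    have "continuous_on ?S (\<lambda>x. (- ln (gq (fst x)))\<^sup>2 * 1)"
      by (intro continuous_intros c1 continuous_on_ln p1)
    then show ?thesis using b by (simp add: bb_def VV_def)
  qed
  obtain x0 where x0: "x0 \<in> ?S" "\<forall>x\<in>?S. (bb (gq (fst x)))\<^sup>2 * VV bos (gq (snd x)) \<le> (bb (gq (fst x0)))\<^sup>2 * VV bos (gq (snd x0))"
    using continuous_attains_sup[OF compact_Times[OF compact_Icc compact_Icc] _ c] True by auto
  show ?thesis
    by (rule exI[of _ "(bb (gq (fst x0)))\<^sup>2 * VV bos (gq (snd x0))"]) (use x0(2) in force)
next
  case False then show ?thesis by auto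
qed

lemma unif_Ar:
  assumes "\<eta> > 0"
  shows "\<exists>\<delta>>0. \<forall>r1\<in>{0..R1}. \<forall>r2\<in>{0..R1}. \<forall>r\<in>{0..R1}. \<bar>r1 - r\<bar> < \<delta> \<longrightarrow> \<bar>r2 - r\<bar> < \<delta> \<longrightarrow>
     Aq bos (gq r1) (gq r2) \<le> Aq bos (gq r) (gq r) + \<eta>"
proof -
  have "uniformly_continuous_on ({0..R1} \<times> {0..R1}) (\<lambda>x. Aq bos (gq (fst x)) (gq (snd x)))"
    by (intro compact_uniformly_continuous Ar_cont compact_Times compact_Icc)
  then obtain d where d: "d > 0" "\<forall>x\<in>{0..R1} \<times> {0..R1}. \<forall>x'\<in>{0..R1} \<times> {0..R1}. dist x' x < d \<longrightarrow>
      dist (Aq bos (gq (fst x')) (gq (snd x'))) (Aq bos (gq (fst x)) (gq (snd x))) < \<eta>"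
    using assms unfolding uniformly_continuous_on_def by metis
  show ?thesis
  proof (intro exI[of _ "d/2"] conjI ballI impI)
    show "d/2 > 0" using d by simp
    fix r1 r2 r assume r: "r1 \<in> {0..R1}" "r2 \<in> {0..R1}" "r \<in> {0..R1}" "\<bar>r1 - r\<bar> < d/2" "\<bar>r2 - r\<bar> < d/2"
    have "dist (r1, r2) (r, r) \<le> \<bar>r1 - r\<bar> + \<bar>r2 - r\<bar>"
      unfolding dist_Pair_Pair dist_real_def using sqrt_sum_squares_le_sum_abs[of "\<bar>r1 - r\<bar>" "\<bar>r2 - r\<bar>"] by simp
    then have "dist (r1, r2) (r, r) < d" using r by simp
    then have "dist (Aq bos (gq r1) (gq r2)) (Aq bos (gq r) (gq r)) < \<eta>"
      using d(2) r by (metis fst_conv snd_conv mem_Sigma_iff)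
    then show "Aq bos (gq r1) (gq r2) \<le> Aq bos (gq r) (gq r) + \<eta>"
      by (simp add: dist_real_def abs_less_iff)
  qed
qed

end

lemma (in prob_space) sq_sum_indep:
  fixes Z :: "'i \<Rightarrow> 'a \<Rightarrow> real"
  assumes J: "finite J" and ind: "indep_vars (\<lambda>_. borel) Z J"
    and int1: "\<And>j. j \<in> J \<Longrightarrow> integrable M (Z j)"
    and int2: "\<And>j. j \<in> J \<Longrightarrow> integrable M (\<lambda>\<omega>. (Z j \<omega>)\<^sup>2)"
    and z: "\<And>j. j \<in> J \<Longrightarrow> expectation (Z j) = 0"
  shows "integrable M (\<lambda>\<omega>. (\<Sum>j\<in>J. Z j \<omega>)\<^sup>2) \<and>
         expectation (\<lambda>\<omega>. (\<Sum>j\<in>J. Z j \<omega>)\<^sup>2) = (\<Sum>j\<in>J. expectation (\<lambda>\<omega>. (Z j \<omega>)\<^sup>2))"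
proof -
  have pair: "integrable M (\<lambda>\<omega>. Z i \<omega> * Z j \<omega>) \<and>
     expectation (\<lambda>\<omega>. Z i \<omega> * Z j \<omega>) = (if i = j then expectation (\<lambda>\<omega>. (Z i \<omega>)\<^sup>2) else 0)"
    if ij: "i \<in> J" "j \<in> J" for i j
  proof (cases "i = j")
    case True then show ?thesis using int2[OF ij(1)] by (simp add: power2_eq_square)
  next
    case False
    have ind2: "indep_vars (\<lambda>_. borel) Z {i, j}" by (rule indep_vars_subset[OF ind]) (use ij in blast)
    have int': "\<And>k. k \<in> {i, j} \<Longrightarrow> integrable M (Z k)" using int1 ij by auto
    have e: "(\<lambda>\<omega>. Z i \<omega> * Z j \<omega>) = (\<lambda>\<omega>. \<Prod>k\<in>{i,j}. Z k \<omega>)" using False by simp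
    have A: "integrable M (\<lambda>\<omega>. Z i \<omega> * Z j \<omega>)"
      unfolding e by (rule indep_vars_integrable[OF _ ind2 int']) simp
    have "expectation (\<lambda>\<omega>. Z i \<omega> * Z j \<omega>) = (\<Prod>k\<in>{i,j}. expectation (Z k))"
      unfolding e by (rule indep_vars_lebesgue_integral[OF _ ind2 int']) simp
    also have "\<dots> = 0" using False z ij by simp
    finally show ?thesis using A False by simp
  qed
  have sq: "(\<lambda>\<omega>. (\<Sum>j\<in>J. Z j \<omega>)\<^sup>2) = (\<lambda>\<omega>. \<Sum>i\<in>J. \<Sum>j\<in>J. Z i \<omega> * Z j \<omega>)"
    by (simp add: power2_eq_square sum_product)
  have intin: "integrable M (\<lambda>\<omega>. \<Sum>j\<in>J. Z i \<omega> * Z j \<omega>)" if "i \<in> J" for i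
    by (rule Bochner_Integration.integrable_sum) (use pair that in blast)
  have "integrable M (\<lambda>\<omega>. \<Sum>i\<in>J. \<Sum>j\<in>J. Z i \<omega> * Z j \<omega>)"
    by (rule Bochner_Integration.integrable_sum) (rule intin)
  moreover have "expectation (\<lambda>\<omega>. \<Sum>i\<in>J. \<Sum>j\<in>J. Z i \<omega> * Z j \<omega>) =
       (\<Sum>i\<in>J. expectation (\<lambda>\<omega>. \<Sum>j\<in>J. Z i \<omega> * Z j \<omega>))"
    by (rule Bochner_Integration.integral_sum) (rule intin)
  moreover have "\<dots> = (\<Sum>i\<in>J. \<Sum>j\<in>J. expectation (\<lambda>\<omega>. Z i \<omega> * Z j \<omega>))"
  proof (rule sum.cong[OF refl])
    fix i assume i: "i \<in> J"
    show "expectation (\<lambda>\<omega>. \<Sum>j\<in>J. Z i \<omega> * Z j \<omega>) = (\<Sum>j\<in>J. expectation (\<lambda>\<omega>. Z i \<omega> * Z j \<omega>))"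
      by (rule Bochner_Integration.integral_sum) (use pair i in blast)
  qed
  moreover have "\<dots> = (\<Sum>i\<in>J. \<Sum>j\<in>J. (if i = j then expectation (\<lambda>\<omega>. (Z i \<omega>)\<^sup>2) else 0))"
  proof (rule sum.cong[OF refl], rule sum.cong[OF refl])
    fix i j assume "i \<in> J" "j \<in> J"
    then show "expectation (\<lambda>\<omega>. Z i \<omega> * Z j \<omega>) = (if i = j then expectation (\<lambda>\<omega>. (Z i \<omega>)\<^sup>2) else 0)"
      using pair by blast
  qed
  moreover have "\<dots> = (\<Sum>i\<in>J. expectation (\<lambda>\<omega>. (Z i \<omega>)\<^sup>2))"
    using J by (simp add: sum.delta)
  ultimately show ?thesis unfolding sq by simp
qed

lemma (in prob_space) cheb2:
  fixes f :: "'a \<Rightarrow> real"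
  assumes [measurable]: "f \<in> borel_measurable M" and int: "integrable M (\<lambda>x. (f x)\<^sup>2)" and t: "t > 0"
  shows "prob {x\<in>space M. f x \<ge> t} \<le> expectation (\<lambda>x. (f x)\<^sup>2) / t\<^sup>2"
proof -
  have "prob {x\<in>space M. f x \<ge> t} \<le> prob {x\<in>space M. (f x)\<^sup>2 \<ge> t\<^sup>2}"
  proof (rule finite_measure_mono)
    show "{x\<in>space M. f x \<ge> t} \<subseteq> {x\<in>space M. (f x)\<^sup>2 \<ge> t\<^sup>2}"
      using t by (auto intro: power_mono)
  qed measurable
  also have "\<dots> \<le> expectation (\<lambda>x. (f x)\<^sup>2) / t\<^sup>2"
    by (rule integral_Markov_inequality_measure[OF int, of "space M"]) (use t in auto)
  finally show ?thesis .
qed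

context setting begin

definition MM :: "nat \<times> (int ^ 'd) \<Rightarrow> nat measure" where
  "MM i = measure_pmf (Kdist bos \<beta> \<theta> \<mu> (fst i) (snd i))"

lemma PM_eq: "(Pmodel bos \<beta> \<theta> \<mu> :: (nat \<times> (int ^ 'd) \<Rightarrow> nat) measure) = PiM UNIV MM"
proof -
  have "(\<lambda>(L, n). measure_pmf (Kdist bos \<beta> \<theta> \<mu> L (n :: int ^ 'd))) = MM"
    by (auto simp: MM_def fun_eq_iff)
  then show ?thesis by (simp add: Pmodel_def)
qed

lemma PM_pps: "product_prob_space (MM :: nat \<times> (int ^ 'd) \<Rightarrow> nat measure)"
  unfolding product_prob_space_def product_prob_space_axioms_def product_sigma_finite_def
  by (auto simp: MM_def prob_space_measure_pmf prob_space_imp_sigma_finite)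

lemma PM_prob: "prob_space (PiM UNIV (MM :: nat \<times> (int ^ 'd) \<Rightarrow> nat measure))"
proof -
  interpret product_prob_space "MM :: nat \<times> (int ^ 'd) \<Rightarrow> nat measure" UNIV by (rule PM_pps)
  show ?thesis by (rule P.prob_space_axioms)
qed

lemma coord_distr: "distr (PiM UNIV MM) (MM i) (\<lambda>\<omega>. \<omega> i) = (MM :: nat \<times> (int ^ 'd) \<Rightarrow> nat measure) i"
proof -
  interpret product_prob_space "MM :: nat \<times> (int ^ 'd) \<Rightarrow> nat measure" UNIV by (rule PM_pps)
  show ?thesis by (rule PiM_component) simp
qed

lemma coord_indep: "prob_space.indep_vars (PiM UNIV MM) MM (\<lambda>i \<omega>. \<omega> i) (UNIV :: (nat \<times> (int ^ 'd)) set)"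
proof -
  interpret P: prob_space "PiM UNIV (MM :: nat \<times> (int ^ 'd) \<Rightarrow> nat measure)" by (rule PM_prob)
  have rv: "\<And>i. P.random_variable (MM i) (\<lambda>\<omega>. \<omega> i)"
    by (rule measurable_component_singleton) simp
  show ?thesis
    by (subst P.indep_vars_iff_distr_eq_PiM[OF _ rv]) (simp_all add: restrict_UNIV coord_distr distr_id)
qed

lemma coord_integral:
  fixes g :: "nat \<Rightarrow> real"
  assumes "integrable (MM i) g"
  shows "integrable (PiM UNIV MM) (\<lambda>\<omega>. g (\<omega> (i :: nat \<times> (int ^ 'd))))"
    "integral\<^sup>L (PiM UNIV MM) (\<lambda>\<omega>. g (\<omega> i)) = integral\<^sup>L (MM i) g"
proof -
  have m: "(\<lambda>\<omega>. \<omega> i) \<in> measurable (PiM UNIV MM) (MM i)"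
    by (rule measurable_component_singleton) simp
  have g: "g \<in> borel_measurable (MM i)" by (simp add: MM_def)
  show "integrable (PiM UNIV MM) (\<lambda>\<omega>. g (\<omega> i))"
    using assms integrable_distr_eq[OF m g] coord_distr[of i] by simp
  show "integral\<^sup>L (PiM UNIV MM) (\<lambda>\<omega>. g (\<omega> i)) = integral\<^sup>L (MM i) g"
    using integral_distr[OF m g] coord_distr[of i] by simp
qed

lemma coord_prob:
  "measure (PiM UNIV MM) {\<omega>\<in>space (PiM UNIV MM). \<omega> (i :: nat \<times> (int ^ 'd)) \<in> A} = measure (MM i) A"
proof -
  have m: "(\<lambda>\<omega>. \<omega> i) \<in> measurable (PiM UNIV MM) (MM i)"
    by (rule measurable_component_singleton) simp
  have "measure (MM i) A = measure (distr (PiM UNIV MM) (MM i) (\<lambda>\<omega>. \<omega> i)) A"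
    using coord_distr[of i] by simp
  also have "\<dots> = measure (PiM UNIV MM) ((\<lambda>\<omega>. \<omega> i) -` A \<inter> space (PiM UNIV MM))"
    by (rule measure_distr[OF m]) (simp add: MM_def)
  finally show ?thesis by (simp add: vimage_def Int_def conj_commute)
qed

end

context setting begin

definition qn :: "nat \<Rightarrow> int ^ 'd \<Rightarrow> real" where
  "qn L n = gq (lat_norm n / real L)"

lemma MM_eq: "MM (L, n) = measure_pmf (pK bos (qn L n))"
  by (simp add: MM_def Kdist_gq qn_def)

lemma qn_qdom: "qdom bos (qn L n)"
  by (simp add: qn_def gq_qdom lat_norm_nonneg)

lemma centered_moments:
  assumes "qdom bos q"
  shows "integrable (measure_pmf (pK bos q)) (\<lambda>k. b * (real k - mm bos q))"
    "measure_pmf.expectation (pK bos q) (\<lambda>k. b * (real k - mm bos q)) = 0"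
    "integrable (measure_pmf (pK bos q)) (\<lambda>k. (b * (real k - mm bos q))\<^sup>2)"
    "measure_pmf.expectation (pK bos q) (\<lambda>k. (b * (real k - mm bos q))\<^sup>2) \<le> b\<^sup>2 * VV bos q"
proof -
  note m1 = mom1_pK[OF assms] and m2 = mom2_pK[OF assms]
  show i1: "integrable (measure_pmf (pK bos q)) (\<lambda>k. b * (real k - mm bos q))"
    using m1 by (intro integrable_mult_right Bochner_Integration.integrable_diff) auto
  show "measure_pmf.expectation (pK bos q) (\<lambda>k. b * (real k - mm bos q)) = 0"
    using m1 by (simp add: Bochner_Integration.integral_diff prob_space.prob_space[OF prob_space_measure_pmf])
  have eq: "(\<lambda>k. (b * (real k - mm bos q))\<^sup>2) = (\<lambda>k. b\<^sup>2 * ((real k)\<^sup>2 - 2 * mm bos q * real k + (mm bos q)\<^sup>2))"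
    by (auto simp: fun_eq_iff power2_eq_square algebra_simps)
  have i2: "integrable (measure_pmf (pK bos q)) (\<lambda>k. (real k)\<^sup>2 - 2 * mm bos q * real k + (mm bos q)\<^sup>2)"
    using m1 m2 by (intro Bochner_Integration.integrable_add Bochner_Integration.integrable_diff integrable_mult_right) auto
  show "integrable (measure_pmf (pK bos q)) (\<lambda>k. (b * (real k - mm bos q))\<^sup>2)"
    unfolding eq using i2 by (rule integrable_mult_right)
  have "measure_pmf.expectation (pK bos q) (\<lambda>k. (real k)\<^sup>2 - 2 * mm bos q * real k + (mm bos q)\<^sup>2)
       = measure_pmf.expectation (pK bos q) (\<lambda>k. (real k)\<^sup>2) - 2 * mm bos q * mm bos q + (mm bos q)\<^sup>2"
    using m1 m2 by (simp add: Bochner_Integration.integral_add Bochner_Integration.integral_diff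
        Bochner_Integration.integrable_diff prob_space.prob_space[OF prob_space_measure_pmf])
  also have "\<dots> \<le> VV bos q"
  proof -
    show ?thesis using m2(2) zero_le_square[of "mm bos q"] unfolding power2_eq_square by linarith
  qed
  finally have le: "measure_pmf.expectation (pK bos q) (\<lambda>k. (real k)\<^sup>2 - 2 * mm bos q * real k + (mm bos q)\<^sup>2) \<le> VV bos q" .
  show "measure_pmf.expectation (pK bos q) (\<lambda>k. (b * (real k - mm bos q))\<^sup>2) \<le> b\<^sup>2 * VV bos q"
    unfolding eq using le by (simp add: mult_left_mono)
qed

lemma block_cheb:
  fixes J :: "(int ^ 'd) set" and u :: "int ^ 'd"
  assumes J: "finite J" and c: "qdom bos c" and t: "t > 0"
  shows "measure (PiM UNIV MM) {\<omega>\<in>space (PiM UNIV MM).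
            (\<Sum>j\<in>J. al bos c + bb c * real (\<omega> (L, u + j))) \<ge> (\<Sum>j\<in>J. Aq bos (qn L (u + j)) c) + t}
         \<le> (\<Sum>j\<in>J. (bb c)\<^sup>2 * VV bos (qn L (u + j))) / t\<^sup>2"
proof -
  interpret P: prob_space "PiM UNIV (MM :: nat \<times> (int ^ 'd) \<Rightarrow> nat measure)" by (rule PM_prob)
  define G :: "nat \<times> (int ^ 'd) \<Rightarrow> nat \<Rightarrow> real" where
    "G i k = bb c * (real k - mm bos (qn (fst i) (snd i)))" for i k
  define idx where "idx j = (L, u + j)" for j :: "int ^ 'd"
  define I where "I = idx ` J"
  have inj: "inj_on idx J" by (auto simp: idx_def inj_on_def)
  have I: "finite I" using J by (simp add: I_def)
  have ind: "P.indep_vars (\<lambda>_. borel) (\<lambda>i \<omega>. G i (\<omega> i)) I"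
  proof -
    have "P.indep_vars (\<lambda>_. borel) (\<lambda>i \<omega>. G i (\<omega> i)) UNIV"
      by (rule P.indep_vars_compose2[OF coord_indep]) (simp add: MM_def)
    then show ?thesis by (rule P.indep_vars_subset) simp
  qed
  have mom: "integrable (MM i) (G i) \<and> integral\<^sup>L (MM i) (G i) = 0 \<and>
             integrable (MM i) (\<lambda>k. (G i k)\<^sup>2) \<and> integral\<^sup>L (MM i) (\<lambda>k. (G i k)\<^sup>2) \<le> (bb c)\<^sup>2 * VV bos (qn (fst i) (snd i))" for i
  proof -
    obtain L' n where i: "i = (L', n)" by force
    have g: "G i = (\<lambda>k. bb c * (real k - mm bos (qn L' n)))" by (simp add: G_def i fun_eq_iff)
    have mi: "MM i = measure_pmf (pK bos (qn L' n))" by (simp add: i MM_eq)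
    note cm = centered_moments[OF qn_qdom[of L' n], of "bb c"]
    show ?thesis unfolding g mi unfolding i fst_conv snd_conv using cm by blast
  qed
  have S: "integrable (PiM UNIV MM) (\<lambda>\<omega>. (\<Sum>i\<in>I. G i (\<omega> i))\<^sup>2) \<and>
       P.expectation (\<lambda>\<omega>. (\<Sum>i\<in>I. G i (\<omega> i))\<^sup>2) = (\<Sum>i\<in>I. P.expectation (\<lambda>\<omega>. (G i (\<omega> i))\<^sup>2))"
  proof (rule P.sq_sum_indep[OF I ind])
    fix i assume "i \<in> I"
    show "integrable (PiM UNIV MM) (\<lambda>\<omega>. G i (\<omega> i))" using mom[of i] coord_integral(1)[of i "G i"] by simp
    show "integrable (PiM UNIV MM) (\<lambda>\<omega>. (G i (\<omega> i))\<^sup>2)" using mom[of i] coord_integral(1)[of i "\<lambda>k. (G i k)\<^sup>2"] by simp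
    show "P.expectation (\<lambda>\<omega>. G i (\<omega> i)) = 0" using mom[of i] coord_integral(2)[of i "G i"] by simp
  qed
  have E: "P.expectation (\<lambda>\<omega>. (\<Sum>i\<in>I. G i (\<omega> i))\<^sup>2) \<le> (\<Sum>j\<in>J. (bb c)\<^sup>2 * VV bos (qn L (u + j)))"
  proof -
    have "(\<Sum>i\<in>I. P.expectation (\<lambda>\<omega>. (G i (\<omega> i))\<^sup>2)) \<le> (\<Sum>i\<in>I. (bb c)\<^sup>2 * VV bos (qn (fst i) (snd i)))"
    proof (rule sum_mono)
      fix i assume "i \<in> I"
      show "P.expectation (\<lambda>\<omega>. (G i (\<omega> i))\<^sup>2) \<le> (bb c)\<^sup>2 * VV bos (qn (fst i) (snd i))"
        using mom[of i] coord_integral(2)[of i "\<lambda>k. (G i k)\<^sup>2"] by simp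
    qed
    also have "\<dots> = (\<Sum>j\<in>J. (bb c)\<^sup>2 * VV bos (qn L (u + j)))"
      unfolding I_def by (subst sum.reindex[OF inj]) (simp add: idx_def)
    finally show ?thesis using S by simp
  qed
  have meas: "(\<lambda>\<omega>. \<Sum>i\<in>I. G i (\<omega> i)) \<in> borel_measurable (PiM UNIV MM)"
  proof (rule borel_measurable_sum)
    fix i
    show "(\<lambda>\<omega>. G i (\<omega> i)) \<in> borel_measurable (PiM UNIV MM)"
      by (rule measurable_compose[OF measurable_component_singleton]) (simp_all add: MM_def)
  qed
  have eqsum: "(\<Sum>i\<in>I. G i (\<omega> i)) = (\<Sum>j\<in>J. al bos c + bb c * real (\<omega> (L, u + j))) - (\<Sum>j\<in>J. Aq bos (qn L (u + j)) c)" for \<omega>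
  proof -
    have "(\<Sum>i\<in>I. G i (\<omega> i)) = (\<Sum>j\<in>J. G (idx j) (\<omega> (idx j)))"
      unfolding I_def by (subst sum.reindex[OF inj]) simp
    also have "\<dots> = (\<Sum>j\<in>J. (al bos c + bb c * real (\<omega> (L, u + j))) - Aq bos (qn L (u + j)) c)"
      by (intro sum.cong refl) (simp add: G_def idx_def Aq_def algebra_simps)
    finally show ?thesis by (simp add: sum_subtractf)
  qed
  have "measure (PiM UNIV MM) {\<omega>\<in>space (PiM UNIV MM).
            (\<Sum>j\<in>J. al bos c + bb c * real (\<omega> (L, u + j))) \<ge> (\<Sum>j\<in>J. Aq bos (qn L (u + j)) c) + t}
       = P.prob {\<omega>\<in>space (PiM UNIV MM). (\<Sum>i\<in>I. G i (\<omega> i)) \<ge> t}"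
    by (simp add: eqsum algebra_simps)
  also have "\<dots> \<le> P.expectation (\<lambda>\<omega>. (\<Sum>i\<in>I. G i (\<omega> i))\<^sup>2) / t\<^sup>2"
    by (rule P.cheb2[OF meas _ t]) (use S in simp)
  also have "\<dots> \<le> (\<Sum>j\<in>J. (bb c)\<^sup>2 * VV bos (qn L (u + j))) / t\<^sup>2"
    using E t by (simp add: divide_right_mono)
  finally show ?thesis .
qed

end

context setting begin

lemma coord_meas[measurable]: "(\<lambda>\<omega>. \<omega> i) \<in> measurable (PiM UNIV MM) (count_space UNIV)"
  using measurable_component_singleton[of i UNIV MM] by (simp add: MM_def)

lemma null_insupp:
  assumes "finite J"
  shows "measure (PiM UNIV MM) {\<omega>\<in>space (PiM UNIV MM). \<exists>j\<in>J. \<not> insupp bos (\<omega> (L, u + j))} = 0"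
proof -
  interpret P: prob_space "PiM UNIV (MM :: nat \<times> (int ^ 'd) \<Rightarrow> nat measure)" by (rule PM_prob)
  have eq: "{\<omega>\<in>space (PiM UNIV MM). \<exists>j\<in>J. \<not> insupp bos (\<omega> (L, u + j))} =
      (\<Union>j\<in>J. {\<omega>\<in>space (PiM UNIV MM). \<omega> (L, u + j) \<in> {k. \<not> insupp bos k}})" by auto
  have "P.prob (\<Union>j\<in>J. {\<omega>\<in>space (PiM UNIV MM). \<omega> (L, u + j) \<in> {k. \<not> insupp bos k}})
        \<le> (\<Sum>j\<in>J. P.prob {\<omega>\<in>space (PiM UNIV MM). \<omega> (L, u + j) \<in> {k. \<not> insupp bos k}})"
  proof (rule P.finite_measure_subadditive_finite[OF assms])
    have ev: "{\<omega>\<in>space (PiM UNIV MM). \<omega> (L, u + j) \<in> {k. \<not> insupp bos k}} \<in> P.events" for j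
      by measurable
    show "(\<lambda>j. {\<omega>\<in>space (PiM UNIV MM). \<omega> (L, u + j) \<in> {k. \<not> insupp bos k}}) ` J \<subseteq> P.events"
      using ev by blast
  qed
  also have "\<dots> = 0"
    by (intro sum.neutral ballI) (simp only: coord_prob, simp add: MM_eq prob_not_insupp qn_qdom)
  finally show ?thesis unfolding eq using measure_nonneg by (meson antisym)
qed

lemma bad_prob:
  fixes u :: "int ^ 'd"
  assumes eps: "0 < \<epsilon>" "\<epsilon> < 1"
    and Emin: "Emin > 0" "Emin \<le> E"
    and B: "B \<ge> 0" "\<And>j. j \<in> Box 0 s \<Longrightarrow> (bb c)\<^sup>2 * VV bos (qn L (u + j)) \<le> B"
    and unif: "\<And>j. j \<in> Box 0 s \<Longrightarrow> Aq bos (qn L (u + j)) c \<le> E + \<epsilon> * Emin / 4"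
    and L: "L \<ge> 2" and s: "real s ^ CARD('d) * E \<le> (1 - \<epsilon>) * ln (real L)"
    and c: "qdom bos c"
  shows "measure (PiM UNIV MM) {\<omega>\<in>space (PiM UNIV MM). (1 - \<epsilon>/4) * ln (real L) <
            (\<Sum>j\<in>Box 0 s. al bos c + bb c * real (\<omega> (L, u + j))) \<or> (\<exists>j\<in>Box 0 s. \<not> insupp bos (\<omega> (L, u + j)))}
         \<le> 16 * B / (Emin * \<epsilon>\<^sup>2 * ln (real L))"
proof -
  interpret P: prob_space "PiM UNIV (MM :: nat \<times> (int ^ 'd) \<Rightarrow> nat measure)" by (rule PM_prob)
  define J where "J = Box (0::int^'d) s"
  define n where "n = real s ^ CARD('d)"
  have Jfin: "finite J" by (simp add: J_def Box_finite)
  have cardJ: "real (card J) = n" by (simp add: J_def n_def Box_card)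
  have n0: "n \<ge> 0" by (simp add: n_def)
  have lnL: "ln (real L) > 0" using L by simp
  have E0: "E > 0" using Emin by simp
  define mean where "mean = (\<Sum>j\<in>J. Aq bos (qn L (u + j)) c)"
  have mean_le: "mean \<le> (1 - \<epsilon>/2) * ln (real L)"
  proof -
    have "mean \<le> (\<Sum>j\<in>J. E + \<epsilon> * Emin / 4)" unfolding mean_def by (rule sum_mono) (use unif in \<open>auto simp: J_def\<close>)
    also have "\<dots> = n * (E + \<epsilon> * Emin / 4)" using cardJ by simp
    also have "\<dots> \<le> n * (E * (1 + \<epsilon>/4))"
      using n0 Emin eps by (intro mult_left_mono) (auto simp: algebra_simps)
    also have "\<dots> = (n * E) * (1 + \<epsilon>/4)" by simp
    also have "\<dots> \<le> ((1 - \<epsilon>) * ln (real L)) * (1 + \<epsilon>/4)"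
      using s eps by (intro mult_right_mono) (auto simp: n_def)
    also have "\<dots> \<le> (1 - \<epsilon>/2) * ln (real L)"
    proof -
      have "(1 - \<epsilon>) * (1 + \<epsilon>/4) \<le> 1 - \<epsilon>/2" using eps by (simp add: algebra_simps power2_eq_square)
      then show ?thesis using lnL by (simp add: mult.commute mult.left_commute mult_right_mono)
    qed
    finally show ?thesis .
  qed
  define t where "t = (1 - \<epsilon>/4) * ln (real L) - mean"
  have t_ge: "t \<ge> \<epsilon>/4 * ln (real L)" using mean_le by (simp add: t_def algebra_simps)
  have t0: "t > 0"
  proof -
    have "0 < \<epsilon>/4 * ln (real L)" using eps lnL by simp
    then show ?thesis using t_ge by linarith
  qed
  have sub: "{\<omega>\<in>space (PiM UNIV MM). (1 - \<epsilon>/4) * ln (real L) <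
            (\<Sum>j\<in>Box 0 s. al bos c + bb c * real (\<omega> (L, u + j))) \<or> (\<exists>j\<in>Box 0 s. \<not> insupp bos (\<omega> (L, u + j)))}
         \<subseteq> {\<omega>\<in>space (PiM UNIV MM). (\<Sum>j\<in>J. al bos c + bb c * real (\<omega> (L, u + j))) \<ge> mean + t}
           \<union> {\<omega>\<in>space (PiM UNIV MM). \<exists>j\<in>J. \<not> insupp bos (\<omega> (L, u + j))}"
    by (auto simp: t_def J_def)
  have "measure (PiM UNIV MM) {\<omega>\<in>space (PiM UNIV MM). (1 - \<epsilon>/4) * ln (real L) <
            (\<Sum>j\<in>Box 0 s. al bos c + bb c * real (\<omega> (L, u + j))) \<or> (\<exists>j\<in>Box 0 s. \<not> insupp bos (\<omega> (L, u + j)))}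
        \<le> measure (PiM UNIV MM) ({\<omega>\<in>space (PiM UNIV MM). (\<Sum>j\<in>J. al bos c + bb c * real (\<omega> (L, u + j))) \<ge> mean + t}
           \<union> {\<omega>\<in>space (PiM UNIV MM). \<exists>j\<in>J. \<not> insupp bos (\<omega> (L, u + j))})"
    by (rule P.finite_measure_mono[OF sub]) (use Jfin in measurable)
  also have "\<dots> \<le> measure (PiM UNIV MM) {\<omega>\<in>space (PiM UNIV MM). (\<Sum>j\<in>J. al bos c + bb c * real (\<omega> (L, u + j))) \<ge> mean + t}
           + measure (PiM UNIV MM) {\<omega>\<in>space (PiM UNIV MM). \<exists>j\<in>J. \<not> insupp bos (\<omega> (L, u + j))}"
    by (rule measure_Un_le) (use Jfin in measurable)
  also have "\<dots> \<le> (\<Sum>j\<in>J. (bb c)\<^sup>2 * VV bos (qn L (u + j))) / t\<^sup>2 + 0"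
    using block_cheb[OF Jfin c t0, of L u] null_insupp[OF Jfin, of L u] by (simp add: mean_def)
  also have "\<dots> \<le> (n * B) / (\<epsilon>/4 * ln (real L))\<^sup>2"
  proof -
    have "(\<Sum>j\<in>J. (bb c)\<^sup>2 * VV bos (qn L (u + j))) \<le> (\<Sum>j\<in>J. B)" by (rule sum_mono) (use B in \<open>auto simp: J_def\<close>)
    also have "\<dots> = n * B" using cardJ by simp
    finally have X: "(\<Sum>j\<in>J. (bb c)\<^sup>2 * VV bos (qn L (u + j))) \<le> n * B" .
    have t2: "(\<epsilon>/4 * ln (real L))\<^sup>2 \<le> t\<^sup>2" using t_ge eps lnL by (intro power_mono) auto
    have p: "0 < (\<epsilon>/4 * ln (real L))\<^sup>2" using eps lnL by simp
    have "(\<Sum>j\<in>J. (bb c)\<^sup>2 * VV bos (qn L (u + j))) / t\<^sup>2 \<le> (n * B) / t\<^sup>2"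
      using X by (simp add: divide_right_mono)
    also have "\<dots> \<le> (n * B) / (\<epsilon>/4 * ln (real L))\<^sup>2"
    proof (rule divide_left_mono[OF t2])
      show "0 \<le> n * B" using n0 B(1) by simp
      show "0 < t\<^sup>2 * (\<epsilon>/4 * ln (real L))\<^sup>2" using t0 p by simp
    qed
    finally show ?thesis by simp
  qed
  also have "\<dots> \<le> 16 * B / (Emin * \<epsilon>\<^sup>2 * ln (real L))"
  proof -
    have nle: "n \<le> ln (real L) / Emin"
    proof -
      have "n * E \<le> ln (real L)" using s eps lnL unfolding n_def by (smt (verit) mult_right_mono mult_left_le_one_le)
      then have "n * Emin \<le> ln (real L)" using n0 Emin by (smt (verit) mult_left_mono)
      then show ?thesis using Emin by (simp add: field_simps)
    qed
    have "(n * B) / (\<epsilon>/4 * ln (real L))\<^sup>2 \<le> (ln (real L) / Emin * B) / (\<epsilon>/4 * ln (real L))\<^sup>2"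
      using nle B(1) by (intro divide_right_mono mult_right_mono) auto
    also have "\<dots> = 16 * B / (Emin * \<epsilon>\<^sup>2 * ln (real L))"
      using lnL Emin eps by (simp add: field_simps power2_eq_square)
    finally show ?thesis .
  qed
  finally show ?thesis .
qed

end

lemma (in prob_space) hoeffding_classes:
  fixes B :: "'u \<Rightarrow> 'a \<Rightarrow> real" and cls :: "'u \<Rightarrow> 'c"
  assumes U: "finite U"
    and ind: "\<And>C. C \<in> cls ` U \<Longrightarrow> indep_vars (\<lambda>_. borel) B {u\<in>U. cls u = C}"
    and rng: "\<And>u \<omega>. u \<in> U \<Longrightarrow> B u \<omega> \<in> {0..1}"
    and d: "\<delta> > 0" and N: "real (card (cls ` U)) \<le> N"
  shows "prob {\<omega>\<in>space M. (\<Sum>u\<in>U. B u \<omega>) \<ge> (\<Sum>u\<in>U. expectation (B u)) + \<delta>}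
         \<le> real (card (cls ` U)) * exp (- 2 * (\<delta> / N)\<^sup>2 / real (card U))"
proof (cases "U = {}")
  case True then show ?thesis using d by simp
next
  case Une: False
  define K where "K = cls ` U"
  have K: "finite K" "K \<noteq> {}" using U Une by (auto simp: K_def)
  have "real (card K) > 0" using K by (simp add: card_gt_0_iff)
  then have N0: "N > 0" using N by (simp add: K_def)
  define ev where "ev C = {\<omega>\<in>space M. (\<Sum>u\<in>{u\<in>U. cls u = C}. B u \<omega>) \<ge> (\<Sum>u\<in>{u\<in>U. cls u = C}. expectation (B u)) + \<delta> / N}" for C
  have rv: "random_variable borel (B u)" if "u \<in> U" for u
  proof -
    have "indep_vars (\<lambda>_. borel) B {v\<in>U. cls v = cls u}" using ind that by auto
    then show ?thesis using that unfolding indep_vars_def by auto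
  qed
  have ev_sets: "ev C \<in> events" for C
  proof -
    have [measurable]: "\<And>u. u \<in> {u\<in>U. cls u = C} \<Longrightarrow> B u \<in> borel_measurable M" using rv by auto
    show ?thesis unfolding ev_def by measurable
  qed
  have sub: "{\<omega>\<in>space M. (\<Sum>u\<in>U. B u \<omega>) \<ge> (\<Sum>u\<in>U. expectation (B u)) + \<delta>} \<subseteq> (\<Union>C\<in>K. ev C)"
  proof
    fix \<omega> assume w: "\<omega> \<in> {\<omega>\<in>space M. (\<Sum>u\<in>U. B u \<omega>) \<ge> (\<Sum>u\<in>U. expectation (B u)) + \<delta>}"
    show "\<omega> \<in> (\<Union>C\<in>K. ev C)"
    proof (rule ccontr)
      assume "\<omega> \<notin> (\<Union>C\<in>K. ev C)"
      then have lt: "(\<Sum>u\<in>{u\<in>U. cls u = C}. B u \<omega>) < (\<Sum>u\<in>{u\<in>U. cls u = C}. expectation (B u)) + \<delta> / N" if "C \<in> K" for C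
        using that w by (auto simp: ev_def)
      have "(\<Sum>u\<in>U. B u \<omega>) = (\<Sum>C\<in>K. \<Sum>u\<in>{u\<in>U. cls u = C}. B u \<omega>)"
        using sum.group[OF U K(1), of cls "\<lambda>u. B u \<omega>"] by (simp add: K_def)
      also have "\<dots> < (\<Sum>C\<in>K. (\<Sum>u\<in>{u\<in>U. cls u = C}. expectation (B u)) + \<delta> / N)"
        by (rule sum_strict_mono[OF K(1) K(2)]) (rule lt)
      also have "\<dots> = (\<Sum>u\<in>U. expectation (B u)) + real (card K) * (\<delta> / N)"
        using sum.group[OF U K(1), of cls "\<lambda>u. expectation (B u)"] by (simp add: K_def sum.distrib)
      also have "\<dots> \<le> (\<Sum>u\<in>U. expectation (B u)) + \<delta>"
      proof -
        have "real (card K) * (\<delta> / N) \<le> N * (\<delta> / N)" using N d N0 by (intro mult_right_mono) (auto simp: K_def)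
        then show ?thesis using N0 by simp
      qed
      finally show False using w by simp
    qed
  qed
  have hoeff: "prob (ev C) \<le> exp (- 2 * (\<delta> / N)\<^sup>2 / real (card U))" if C: "C \<in> K" for C
  proof -
    define UC where "UC = {u\<in>U. cls u = C}"
    have UC: "finite UC" "UC \<noteq> {}" "card UC \<le> card U" using U C by (auto simp: UC_def K_def card_mono)
    interpret H: Hoeffding_ineq M UC B "\<lambda>_. 0" "\<lambda>_. 1" "\<Sum>u\<in>UC. expectation (B u)"
    proof unfold_locales
      show "finite UC" by fact
      show "indep_vars (\<lambda>_. borel) B UC" using ind C by (simp add: UC_def K_def)
      show "AE x in M. B i x \<in> {0..1}" if "i \<in> UC" for i using rng that by (simp add: UC_def)
    qed simp
    have "prob (ev C) = prob {x\<in>space M. (\<Sum>u\<in>UC. B u x) \<ge> (\<Sum>u\<in>UC. expectation (B u)) + \<delta> / N}"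
      by (simp add: ev_def UC_def)
    also have "\<dots> \<le> exp (- 2 * (\<delta> / N)\<^sup>2 / (\<Sum>u\<in>UC. (1 - 0)\<^sup>2))"
      by (rule H.Hoeffding_ineq_ge) (use d N0 UC in \<open>auto simp: card_gt_0_iff\<close>)
    also have "\<dots> \<le> exp (- 2 * (\<delta> / N)\<^sup>2 / real (card U))"
    proof -
      have c0: "real (card UC) > 0" using UC by (simp add: card_gt_0_iff)
      have "2 * (\<delta> / N)\<^sup>2 / real (card U) \<le> 2 * (\<delta> / N)\<^sup>2 / real (card UC)"
        using UC c0 by (intro divide_left_mono) auto
      then show ?thesis by simp
    qed
    finally show ?thesis .
  qed
  have "prob {\<omega>\<in>space M. (\<Sum>u\<in>U. B u \<omega>) \<ge> (\<Sum>u\<in>U. expectation (B u)) + \<delta>} \<le> prob (\<Union>C\<in>K. ev C)"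
    by (rule finite_measure_mono[OF sub]) (use K ev_sets in auto)
  also have "\<dots> \<le> (\<Sum>C\<in>K. prob (ev C))"
    by (rule finite_measure_subadditive_finite[OF K(1)]) (use ev_sets in auto)
  also have "\<dots> \<le> (\<Sum>C\<in>K. exp (- 2 * (\<delta> / N)\<^sup>2 / real (card U)))"
    by (rule sum_mono) (rule hoeff)
  finally show ?thesis by (simp add: K_def)
qed

locale main = setting +
  fixes dd :: "'d::finite itself"
    and \<epsilon> Emin Bc \<delta> R1 :: real
  assumes eps: "0 < \<epsilon>" "\<epsilon> < 1" and Emin_pos: "Emin > 0"
    and R1: "2 * real CARD('d) + 1 \<le> R1"
    and Emin_le: "\<And>r. r \<in> {0..R1} \<Longrightarrow> Emin \<le> Aq bos (gq r) (gq r)"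
    and Bc_nn: "Bc \<ge> 0"
    and Bc_le: "\<And>r1 r2. r1 \<in> {0..R1} \<Longrightarrow> r2 \<in> {0..R1} \<Longrightarrow> (bb (gq r1))\<^sup>2 * VV bos (gq r2) \<le> Bc"
    and dpos: "\<delta> > 0"
    and unif: "\<And>r1 r2 r. r1 \<in> {0..R1} \<Longrightarrow> r2 \<in> {0..R1} \<Longrightarrow> r \<in> {0..R1} \<Longrightarrow>
        \<bar>r1 - r\<bar> < \<delta> \<Longrightarrow> \<bar>r2 - r\<bar> < \<delta> \<Longrightarrow> Aq bos (gq r1) (gq r2) \<le> Aq bos (gq r) (gq r) + \<epsilon> * Emin / 4"
begin


definition rr :: "nat \<Rightarrow> int ^ 'd \<Rightarrow> real" where "rr L n = lat_norm n / real L"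
definition tt :: "nat \<Rightarrow> int ^ 'd \<Rightarrow> real" where
  "tt L u = root CARD('d) (ln (real L) * (1 - \<epsilon>) / Ent bos \<beta> \<theta> \<mu> L u)"
definition ss :: "nat \<Rightarrow> int ^ 'd \<Rightarrow> nat" where "ss L u = nat \<lfloor>tt L u\<rfloor>"
definition ic :: "nat \<Rightarrow> int ^ 'd \<Rightarrow> nat" where "ic L u = nat \<lfloor>rr L u / (\<delta>/2)\<rfloor>"
definition cq :: "nat \<Rightarrow> int ^ 'd \<Rightarrow> real" where "cq L u = gq (\<delta>/2 * real (ic L u))"
definition TT :: "nat \<Rightarrow> nat" where "TT L = nat \<lfloor>root CARD('d) (ln (real L) / Emin)\<rfloor> + 1"
definition Nr :: nat where "Nr = nat \<lfloor>R1 / (\<delta>/2)\<rfloor> + 1"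
definition badp :: "nat \<Rightarrow> int ^ 'd \<Rightarrow> (nat \<times> (int ^ 'd) \<Rightarrow> nat) \<Rightarrow> bool" where
  "badp L u \<omega> \<longleftrightarrow> 1 \<le> ss L u \<and> ((1 - \<epsilon>/4) * ln (real L) <
      (\<Sum>j\<in>Box 0 (ss L u). al bos (cq L u) + bb (cq L u) * real (\<omega> (L, u + j))) \<or>
      (\<exists>j\<in>Box 0 (ss L u). \<not> insupp bos (\<omega> (L, u + j))))"

lemma D_pos: "0 < CARD('d)" by simp

lemma qn_rr: "qn L n = gq (rr L n)" by (simp add: qn_def rr_def)

lemma rr_nonneg: "rr L n \<ge> 0" by (simp add: rr_def lat_norm_nonneg)

lemma rr_box: fixes u :: "int ^ 'd" assumes "u \<in> Box 1 L" "L \<ge> 1" shows "rr L u \<le> real CARD('d)"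
proof -
  have "\<bar>u $ i\<bar> \<le> int L" for i
  proof -
    have "1 \<le> u $ i" "u $ i \<le> int L" using assms(1) by (auto simp: Box_def)
    then show ?thesis by arith
  qed
  then have "lat_norm u \<le> real CARD('d) * real_of_int (int L)" by (rule lat_norm_bound)
  then show ?thesis using assms(2) by (simp add: rr_def field_simps)
qed

lemma rr_R1: fixes u :: "int ^ 'd" assumes "u \<in> Box 1 L" "L \<ge> 1" shows "rr L u \<in> {0..R1}"
  using rr_box[OF assms] rr_nonneg[of L u] R1 by auto

lemma Ent_rr: "Ent bos \<beta> \<theta> \<mu> L u = Aq bos (gq (rr L u)) (gq (rr L u))"
  by (simp add: Ent_eq rr_def)

lemma Ent_ge: fixes u :: "int ^ 'd" assumes "u \<in> Box 1 L" "L \<ge> 1" shows "Ent bos \<beta> \<theta> \<mu> L u \<ge> Emin"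
  using Emin_le[OF rr_R1[OF assms]] by (simp add: Ent_rr)

lemma ss_lt_TT: fixes u :: "int ^ 'd" assumes "u \<in> Box 1 L" "L \<ge> 1" shows "ss L u < TT L"
proof -
  define E where "E = Ent bos \<beta> \<theta> \<mu> L u"
  have E: "E \<ge> Emin" using Ent_ge[OF assms] by (simp add: E_def)
  have lnL: "ln (real L) \<ge> 0" using assms(2) by simp
  have "ln (real L) * (1 - \<epsilon>) / E \<le> ln (real L) / E"
    using eps lnL E Emin_pos by (intro divide_right_mono) (auto simp: mult_left_le)
  also have "\<dots> \<le> ln (real L) / Emin"
    using lnL E Emin_pos by (intro divide_left_mono) auto
  finally have "tt L u \<le> root CARD('d) (ln (real L) / Emin)"
    unfolding tt_def E_def by (subst real_root_le_iff) auto
  then have "\<lfloor>tt L u\<rfloor> \<le> \<lfloor>root CARD('d) (ln (real L) / Emin)\<rfloor>" by (rule floor_mono)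
  then show ?thesis unfolding ss_def TT_def by linarith
qed

lemma ss_pow: fixes u :: "int ^ 'd" assumes "u \<in> Box 1 L" "L \<ge> 1"
  shows "real (ss L u) ^ CARD('d) * Ent bos \<beta> \<theta> \<mu> L u \<le> (1 - \<epsilon>) * ln (real L)"
proof (cases "ss L u = 0")
  case True
  have "0 \<le> (1 - \<epsilon>) * ln (real L)" using assms eps by simp
  then show ?thesis using True D_pos by (simp add: zero_power)
next
  case False
  define E where "E = Ent bos \<beta> \<theta> \<mu> L u"
  define x where "x = ln (real L) * (1 - \<epsilon>) / E"
  have E: "E > 0" using Ent_ge[OF assms] Emin_pos by (simp add: E_def)
  have tt1: "tt L u \<ge> 1" using False by (simp add: ss_def)
  then have "x > 0" using real_root_gt_0_iff[OF D_pos, of x] by (simp add: tt_def x_def E_def)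
  have s_le: "real (ss L u) \<le> tt L u" using tt1 by (simp add: ss_def)
  have "real (ss L u) ^ CARD('d) \<le> tt L u ^ CARD('d)" using s_le by (intro power_mono) auto
  also have "\<dots> = x" unfolding tt_def x_def E_def[symmetric] using \<open>x > 0\<close> by (simp add: real_root_pow_pos2 x_def)
  finally have "real (ss L u) ^ CARD('d) * E \<le> x * E" using E by (intro mult_right_mono) auto
  also have "x * E = (1 - \<epsilon>) * ln (real L)" using E by (simp add: x_def)
  finally show ?thesis by (simp add: E_def)
qed

lemma ic_props: fixes u :: "int ^ 'd" assumes "u \<in> Box 1 L" "L \<ge> 1"
  shows "ic L u < Nr" "\<delta>/2 * real (ic L u) \<in> {0..R1}" "\<delta>/2 * real (ic L u) \<le> rr L u"
    "rr L u - \<delta>/2 * real (ic L u) < \<delta>/2"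
proof -
  define h where "h = \<delta>/2"
  have h: "h > 0" using dpos by (simp add: h_def)
  have icd: "ic L u = nat \<lfloor>rr L u / h\<rfloor>" by (simp add: ic_def h_def)
  have r: "rr L u \<in> {0..R1}" by (rule rr_R1[OF assms])
  have fl0: "\<lfloor>rr L u / h\<rfloor> \<ge> 0" using r h by simp
  have ic: "real (ic L u) = real_of_int \<lfloor>rr L u / h\<rfloor>" using fl0 by (simp add: icd)
  have a: "real_of_int \<lfloor>rr L u / h\<rfloor> \<le> rr L u / h" by (rule of_int_floor_le)
  have b: "rr L u / h < real_of_int \<lfloor>rr L u / h\<rfloor> + 1" by (rule real_of_int_floor_add_one_gt)
  have a': "real_of_int \<lfloor>rr L u / h\<rfloor> * h \<le> rr L u" using a by (simp only: pos_le_divide_eq[OF h])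
  have b': "rr L u < (real_of_int \<lfloor>rr L u / h\<rfloor> + 1) * h" using b by (simp only: pos_divide_less_eq[OF h])
  have le: "h * real (ic L u) \<le> rr L u" using a' by (simp add: ic mult.commute)
  then show "\<delta>/2 * real (ic L u) \<le> rr L u" by (simp only: h_def)
  have "rr L u - h * real (ic L u) < h" using b' by (simp add: ic algebra_simps)
  then show "rr L u - \<delta>/2 * real (ic L u) < \<delta>/2" by (simp only: h_def)
  have "h * real (ic L u) \<in> {0..R1}" using le r h by auto
  then show "\<delta>/2 * real (ic L u) \<in> {0..R1}" by (simp only: h_def)
  have "\<lfloor>rr L u / h\<rfloor> \<le> \<lfloor>R1 / h\<rfloor>" using r h by (intro floor_mono divide_right_mono) auto
  then show "ic L u < Nr" unfolding icd Nr_def h_def by linarith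
qed

lemma cq_qdom: "qdom bos (cq L u)"
  unfolding cq_def by (rule gq_qdom) (use dpos in simp)

lemma count_bound:
  assumes L: "L \<ge> 2"
  shows "real (card {u \<in> Box 1 L. Rrec L u (\<lambda>n. \<omega> (L, n)) \<le> ereal (tt L u)})
     \<le> real (Nr * TT L) * exp ((1 - \<epsilon>/4) * ln (real L)) + real (card {u \<in> Box 1 L. badp L u \<omega>})"
proof -
  have L1: "L \<ge> 1" using L by simp
  define U0 where "U0 = {u \<in> Box 1 L. Rrec L u (\<lambda>n. \<omega> (L, n)) \<le> ereal (tt L u)}"
  define U where "U = {u \<in> U0. \<not> badp L u \<omega>}"
  define key where "key u = (ic L u, ss L u)" for u
  define pat where "pat u = restrict (\<lambda>j. \<omega> (L, u + j)) (Box 0 (ss L u))" for u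
  define K where "K = {..<Nr} \<times> {..<TT L}"
  define Q where "Q k x = (\<Prod>j\<in>Box 0 (snd k). pmf (pK bos (gq (\<delta>/2 * real (fst k)))) (x j))"
    for k :: "nat \<times> nat" and x :: "int ^ 'd \<Rightarrow> nat"
  define \<tau> where "\<tau> = exp (- ((1 - \<epsilon>/4) * ln (real L)))"
  have fin: "finite U0" "finite U" by (auto simp: U0_def U_def Box_finite)
  have uniq: "1 \<le> ss L u \<and> (\<forall>v\<in>Box 1 L. v \<noteq> u \<longrightarrow> pat_differ (\<lambda>n. \<omega> (L, n)) u v (ss L u))"
    if "u \<in> U0" for u
    using Rrec_le_unique_floor[of L u "\<lambda>n. \<omega> (L, n)" "tt L u"] that by (simp add: U0_def ss_def)
  have inj: "inj_on (\<lambda>u. (key u, pat u)) U"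
  proof (rule inj_onI)
    fix u v assume u: "u \<in> U" and v: "v \<in> U" and e: "(key u, pat u) = (key v, pat v)"
    have s: "ss L u = ss L v" using e by (simp add: key_def)
    have "\<omega> (L, u + j) = \<omega> (L, v + j)" if "j \<in> Box 0 (ss L u)" for j
    proof -
      have "pat u j = pat v j" using e by simp
      then show ?thesis using that s by (simp add: pat_def)
    qed
    then have "\<not> pat_differ (\<lambda>n. \<omega> (L, n)) u v (ss L u)" by (simp add: pat_differ_def)
    moreover have "v \<in> Box 1 L" using v by (simp add: U_def U0_def)
    ultimately show "u = v" using uniq[of u] u by (auto simp: U_def)
  qed
  have keyK: "key u \<in> K" if "u \<in> U" for u
  proof -
    have "u \<in> Box 1 L" using that by (simp add: U_def U0_def)
    then show ?thesis using ic_props(1)[OF _ L1] ss_lt_TT[OF _ L1] by (simp add: key_def K_def)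
  qed
  have tau: "\<tau> > 0" by (simp add: \<tau>_def)
  have Qge: "Q (key u) (pat u) \<ge> \<tau>" if "u \<in> U" for u
  proof -
    have nb: "\<not> badp L u \<omega>" and s1: "1 \<le> ss L u" using that uniq[of u] by (auto simp: U_def)
    then have sum_le: "(\<Sum>j\<in>Box 0 (ss L u). al bos (cq L u) + bb (cq L u) * real (\<omega> (L, u + j))) \<le> (1 - \<epsilon>/4) * ln (real L)"
      and ins: "\<forall>j\<in>Box 0 (ss L u). insupp bos (\<omega> (L, u + j))"
      by (auto simp: badp_def not_less)
    have "Q (key u) (pat u) = (\<Prod>j\<in>Box 0 (ss L u). pmf (pK bos (cq L u)) (pat u j))"
      by (simp only: Q_def key_def fst_conv snd_conv cq_def[symmetric])
    also have "\<dots> = (\<Prod>j\<in>Box 0 (ss L u). pmf (pK bos (cq L u)) (\<omega> (L, u + j)))"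
      by (rule prod.cong) (simp_all add: pat_def)
    also have "\<dots> = (\<Prod>j\<in>Box 0 (ss L u). exp (- (al bos (cq L u) + bb (cq L u) * real (\<omega> (L, u + j)))))"
    proof (rule prod.cong[OF refl])
      fix j :: "int ^ 'd" assume "j \<in> Box 0 (ss L u)"
      then have i: "insupp bos (\<omega> (L, u + j))" using ins by blast
      show "pmf (pK bos (cq L u)) (\<omega> (L, u + j)) = exp (- (al bos (cq L u) + bb (cq L u) * real (\<omega> (L, u + j))))"
        by (subst pmf_pK[OF cq_qdom]) (simp only: i if_True)
    qed
    also have "\<dots> = exp (\<Sum>j\<in>Box 0 (ss L u). - (al bos (cq L u) + bb (cq L u) * real (\<omega> (L, u + j))))"
      by (rule exp_sum[symmetric]) (simp add: Box_finite)
    also have "\<dots> = exp (- (\<Sum>j\<in>Box 0 (ss L u). al bos (cq L u) + bb (cq L u) * real (\<omega> (L, u + j))))"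
      by (simp only: sum_negf)
    also have "\<dots> \<ge> \<tau>" unfolding \<tau>_def using sum_le by simp
    finally show ?thesis .
  qed
  have Qsum: "(\<Sum>x\<in>G. Q k x) \<le> 1" if k: "k \<in> K" and G: "finite G" "G \<subseteq> pat ` {u\<in>U. key u = k}" for k G
  proof -
    have "G \<subseteq> extensional (Box 0 (snd k))"
    proof
      fix x assume "x \<in> G"
      then obtain u where "u \<in> U" "key u = k" "x = pat u" using G by auto
      then show "x \<in> extensional (Box 0 (snd k))" by (auto simp: pat_def key_def)
    qed
    then show ?thesis unfolding Q_def by (intro sum_prod_pmf_le1) (auto simp: Box_finite G)
  qed
  have Kfin: "finite K" by (simp add: K_def)
  have Qnn: "Q k x \<ge> 0" for k x unfolding Q_def by (rule prod_nonneg) simp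
  have cU: "real (card U) \<le> real (card K) / \<tau>"
    by (rule count_by_keys[OF fin(2) Kfin inj keyK Qge tau Qsum Qnn])
  have cardK: "card K = Nr * TT L" by (simp add: K_def card_cartesian_product)
  have inv: "1 / \<tau> = exp ((1 - \<epsilon>/4) * ln (real L))" unfolding \<tau>_def by (simp add: exp_minus inverse_eq_divide)
  have cK: "real (card K) / \<tau> = real (Nr * TT L) * exp ((1 - \<epsilon>/4) * ln (real L))"
    unfolding inv[symmetric] cardK by simp
  have "U0 \<subseteq> U \<union> {u \<in> Box 1 L. badp L u \<omega>}" unfolding U_def U0_def by blast
  then have "card U0 \<le> card (U \<union> {u \<in> Box 1 L. badp L u \<omega>})" by (intro card_mono) (auto simp: U_def fin Box_finite)
  also have "\<dots> \<le> card U + card {u \<in> Box 1 L. badp L u \<omega>}" by (rule card_Un_le)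
  finally have "real (card U0) \<le> real (card U) + real (card {u \<in> Box 1 L. badp L u \<omega>})" by linarith
  then show ?thesis using cU cK by (simp add: U0_def)
qed

end

context main begin

lemma rr_shift:
  fixes u j :: "int ^ 'd"
  assumes u: "u \<in> Box 1 L" and L: "L \<ge> 1" and j: "j \<in> Box 0 (ss L u)"
    and Lg: "real CARD('d) * real (TT L) / real L < min \<delta> 1"
  shows "\<bar>rr L (u + j) - rr L u\<bar> < \<delta>" "rr L (u + j) \<in> {0..R1}"
proof -
  have sT: "ss L u < TT L" by (rule ss_lt_TT[OF u L])
  have "\<bar>j $ i\<bar> \<le> int (TT L)" for i
  proof -
    have "0 \<le> j $ i" "j $ i \<le> int (ss L u) - 1" using j by (auto simp: Box_def)
    then show ?thesis using sT by arith
  qed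
  then have lj: "lat_norm j \<le> real CARD('d) * real (TT L)" using lat_norm_bound[of j "int (TT L)"] by simp
  have "\<bar>rr L (u + j) - rr L u\<bar> = \<bar>lat_norm (u + j) - lat_norm u\<bar> / real L"
    using L by (simp add: rr_def diff_divide_distrib[symmetric])
  also have "\<dots> \<le> lat_norm j / real L"
    using lat_norm_diff[of "u + j" u] L by (intro divide_right_mono) auto
  also have "\<dots> \<le> real CARD('d) * real (TT L) / real L"
    using lj L by (intro divide_right_mono) auto
  finally have d: "\<bar>rr L (u + j) - rr L u\<bar> < min \<delta> 1" using Lg by linarith
  then show "\<bar>rr L (u + j) - rr L u\<bar> < \<delta>" by simp
  have "rr L u \<le> real CARD('d)" by (rule rr_box[OF u L])
  then have "rr L (u + j) \<le> real CARD('d) + 1" using d by linarith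
  then show "rr L (u + j) \<in> {0..R1}" using R1 rr_nonneg[of L "u + j"] by auto
qed

definition rho :: "nat \<Rightarrow> real" where "rho L = 16 * Bc / (Emin * \<epsilon>\<^sup>2 * ln (real L))"

lemma bad_prob_main:
  fixes u :: "int ^ 'd"
  assumes u: "u \<in> Box 1 L" and L: "L \<ge> 2"
    and Lg: "real CARD('d) * real (TT L) / real L < min \<delta> 1"
  shows "measure (PiM UNIV MM) {\<omega>\<in>space (PiM UNIV MM). badp L u \<omega>} \<le> rho L"
proof (cases "ss L u = 0")
  case True
  have e: "{\<omega>\<in>space (PiM UNIV MM). badp L u \<omega>} = {}" using True by (auto simp: badp_def)
  have "rho L \<ge> 0" using Bc_nn Emin_pos eps L by (simp add: rho_def)
  then show ?thesis unfolding e by simp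
next
  case False
  have L1: "L \<ge> 1" using L by simp
  define E where "E = Aq bos (gq (rr L u)) (gq (rr L u))"
  have Eq: "Ent bos \<beta> \<theta> \<mu> L u = E" by (simp add: E_def Ent_rr)
  have eq: "{\<omega>\<in>space (PiM UNIV MM). badp L u \<omega>} = {\<omega>\<in>space (PiM UNIV MM). (1 - \<epsilon>/4) * ln (real L) <
            (\<Sum>j\<in>Box 0 (ss L u). al bos (cq L u) + bb (cq L u) * real (\<omega> (L, u + j))) \<or>
            (\<exists>j\<in>Box 0 (ss L u). \<not> insupp bos (\<omega> (L, u + j)))}"
    using False by (auto simp: badp_def)
  have rc: "\<delta>/2 * real (ic L u) \<in> {0..R1}" "\<bar>\<delta>/2 * real (ic L u) - rr L u\<bar> < \<delta>"
    using ic_props(2,3,4)[OF u L1] dpos by auto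
  have ru: "rr L u \<in> {0..R1}" by (rule rr_R1[OF u L1])
  show ?thesis
    unfolding eq rho_def
  proof (rule bad_prob)
    show "0 < \<epsilon>" "\<epsilon> < 1" "Emin > 0" "Bc \<ge> 0" "L \<ge> 2" using eps Emin_pos Bc_nn L by auto
    show "Emin \<le> E" using Ent_ge[OF u L1] Eq by simp
    show "qdom bos (cq L u)" by (rule cq_qdom)
    show "real (ss L u) ^ CARD('d) * E \<le> (1 - \<epsilon>) * ln (real L)" using ss_pow[OF u L1] Eq by simp
    fix j :: "int ^ 'd" assume j: "j \<in> Box 0 (ss L u)"
    note sh = rr_shift[OF u L1 j Lg]
    show "(bb (cq L u))\<^sup>2 * VV bos (qn L (u + j)) \<le> Bc"
      unfolding cq_def qn_rr by (rule Bc_le[OF rc(1) sh(2)])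
    show "Aq bos (qn L (u + j)) (cq L u) \<le> E + \<epsilon> * Emin / 4"
      unfolding cq_def qn_rr E_def by (rule unif[OF sh(2) rc(1) ru sh(1) rc(2)])
  qed
qed

end

context main begin

definition Bv :: "nat \<Rightarrow> int ^ 'd \<Rightarrow> (nat \<times> (int ^ 'd) \<Rightarrow> nat) \<Rightarrow> real" where
  "Bv L u \<omega> = (if badp L u \<omega> then 1 else 0)"

definition cls :: "nat \<Rightarrow> int ^ 'd \<Rightarrow> int ^ 'd" where
  "cls L u = (\<chi> i. u $ i mod int (TT L))"

definition SS :: "nat \<Rightarrow> int ^ 'd \<Rightarrow> (nat \<times> (int ^ 'd)) set" where
  "SS L u = (\<lambda>j. (L, u + j)) ` Box 0 (ss L u)"

lemma badp_restrict: "badp L u (restrict \<omega> (SS L u)) = badp L u \<omega>"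
proof -
  have "restrict \<omega> (SS L u) (L, u + j) = \<omega> (L, u + j)" if "j \<in> Box 0 (ss L u)" for j
    using that by (simp add: SS_def)
  then show ?thesis unfolding badp_def by (auto cong: sum.cong)
qed

lemma SS_disjoint:
  assumes L: "L \<ge> 1"
  shows "disjoint_family_on (SS L) {u \<in> Box 1 L. cls L u = C}"
  unfolding disjoint_family_on_def
proof (intro ballI impI)
  fix u v assume u: "u \<in> {u \<in> Box 1 L. cls L u = C}" and v: "v \<in> {u \<in> Box 1 L. cls L u = C}" and ne: "u \<noteq> v"
  show "SS L u \<inter> SS L v = {}"
  proof (rule ccontr)
    assume "SS L u \<inter> SS L v \<noteq> {}"
    then obtain j k where j: "j \<in> Box 0 (ss L u)" and k: "k \<in> Box 0 (ss L v)" and e: "u + j = v + k"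
      by (auto simp: SS_def)
    obtain i where i: "u $ i \<noteq> v $ i" using ne by (auto simp: vec_eq_iff)
    have T: "ss L u < TT L" "ss L v < TT L" using ss_lt_TT[OF _ L] u v by auto
    have m: "u $ i mod int (TT L) = v $ i mod int (TT L)"
      using u v by (auto simp: cls_def vec_eq_iff)
    have d: "\<bar>u $ i - v $ i\<bar> < int (TT L)"
    proof -
      have "u $ i + j $ i = v $ i + k $ i" using e by (metis vector_add_component)
      moreover have "0 \<le> j $ i" "j $ i < int (ss L u)" "0 \<le> k $ i" "k $ i < int (ss L v)"
        using j k by (auto simp: Box_def)
      ultimately have "u $ i - v $ i < int (TT L)" "- int (TT L) < u $ i - v $ i" using T by linarith+
      then show ?thesis by (simp add: abs_less_iff)
    qed
    have "int (TT L) dvd (u $ i - v $ i)" using m by (simp add: mod_eq_dvd_iff)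
    then obtain z where z: "u $ i - v $ i = int (TT L) * z" by (auto simp: dvd_def)
    have "z \<noteq> 0" using z i by auto
    then have z1: "\<bar>z\<bar> \<ge> 1" by linarith
    have "int (TT L) * 1 \<le> int (TT L) * \<bar>z\<bar>" by (rule mult_left_mono[OF z1]) simp
    then have "\<bar>u $ i - v $ i\<bar> \<ge> int (TT L)" using z by (simp add: abs_mult)
    then show False using d by simp
  qed
qed

lemma SS_sub: "SS L u \<subseteq> UNIV" by simp

lemma badF_meas:
  "(\<lambda>x. if badp L u x then 1 else (0::real)) \<in> borel_measurable (PiM (SS L u) MM)"
proof -
  have c[measurable]: "(\<lambda>x. x (L, u + j)) \<in> measurable (PiM (SS L u) MM) (count_space UNIV)"
    if "j \<in> Box 0 (ss L u)" for j
  proof -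
    have "(L, u + j) \<in> SS L u" using that by (simp add: SS_def)
    then show ?thesis using measurable_component_singleton[of "(L, u + j)" "SS L u" MM] by (simp add: MM_def)
  qed
  have fin[measurable]: "finite (Box 0 (ss L u))" by (simp add: Box_finite)
  have "Measurable.pred (PiM (SS L u) MM) (\<lambda>x. badp L u x)"
    unfolding badp_def by measurable
  then show ?thesis by measurable
qed

lemma indep_class:
  assumes L: "L \<ge> 1"
  shows "prob_space.indep_vars (PiM UNIV MM) (\<lambda>_. borel) (Bv L) {u \<in> Box 1 L. cls L u = C}"
proof -
  interpret P: prob_space "PiM UNIV (MM :: nat \<times> (int ^ 'd) \<Rightarrow> nat measure)" by (rule PM_prob)
  have r: "P.indep_vars (\<lambda>u. PiM (SS L u) MM) (\<lambda>u \<omega>. restrict (\<lambda>i. \<omega> i) (SS L u)) {u \<in> Box 1 L. cls L u = C}"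
    by (rule P.indep_vars_restrict[OF coord_indep _ SS_disjoint[OF L]]) simp
  have "P.indep_vars (\<lambda>_. borel) (\<lambda>u \<omega>. (\<lambda>x. if badp L u x then 1 else (0::real)) (restrict (\<lambda>i. \<omega> i) (SS L u))) {u \<in> Box 1 L. cls L u = C}"
    by (rule P.indep_vars_compose2[OF r badF_meas])
  then show ?thesis
    by (rule P.indep_vars_cong[THEN iffD1, rotated 3]) (auto simp: Bv_def badp_restrict fun_eq_iff)
qed

end

context main begin

lemma TT_bounds:
  assumes L: "L \<ge> 1"
  shows "real (TT L) \<le> ln (real L) / Emin + 2" "real (TT L ^ CARD('d)) \<le> 2 ^ CARD('d) * (ln (real L) / Emin + 1)"
proof -
  define x where "x = ln (real L) / Emin"
  have x0: "x \<ge> 0" using L Emin_pos by (simp add: x_def)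
  define a where "a = root CARD('d) x"
  have a0: "a \<ge> 0" using x0 by (simp add: a_def)
  have ax: "a ^ CARD('d) = x" using x0 by (simp add: a_def real_root_pow_pos2)
  have T: "real (TT L) \<le> a + 1"
  proof -
    have "real (nat \<lfloor>a\<rfloor>) \<le> a" using a0 by simp
    then show ?thesis by (simp add: TT_def a_def x_def)
  qed
  have T0: "0 \<le> real (TT L)" by simp
  have "a \<le> x + 1"
  proof (cases "a \<le> 1")
    case True then show ?thesis using x0 by simp
  next
    case False
    have "a ^ 1 \<le> a ^ CARD('d)" using False by (intro power_increasing) auto
    then show ?thesis using ax by simp
  qed
  then show "real (TT L) \<le> ln (real L) / Emin + 2" using T by (simp add: x_def)
  have "real (TT L ^ CARD('d)) \<le> (a + 1) ^ CARD('d)" using T T0 by (simp add: power_mono)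
  also have "\<dots> \<le> 2 ^ CARD('d) * (x + 1)"
  proof (cases "a \<le> 1")
    case True
    have "(a + 1) ^ CARD('d) \<le> 2 ^ CARD('d)" using True a0 by (intro power_mono) auto
    also have "\<dots> \<le> 2 ^ CARD('d) * (x + 1)" using x0 by simp
    finally show ?thesis .
  next
    case False
    have "(a + 1) ^ CARD('d) \<le> (2 * a) ^ CARD('d)" using False a0 by (intro power_mono) auto
    also have "\<dots> = 2 ^ CARD('d) * x" by (simp add: power_mult_distrib ax)
    also have "\<dots> \<le> 2 ^ CARD('d) * (x + 1)" by simp
    finally show ?thesis .
  qed
  finally show "real (TT L ^ CARD('d)) \<le> 2 ^ CARD('d) * (ln (real L) / Emin + 1)" by (simp add: x_def)
qed

lemma cls_image: assumes "L \<ge> 1" shows "card (cls L ` Box 1 L) \<le> TT L ^ CARD('d)"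
proof -
  have T: "TT L > 0" by (simp add: TT_def)
  have "cls L ` Box 1 L \<subseteq> Box 0 (TT L)"
    using T by (auto simp: cls_def Box_def)
  then have "card (cls L ` Box 1 L) \<le> card (Box (0::int^'d) (TT L))" by (intro card_mono) (simp_all add: Box_finite)
  then show ?thesis by (simp add: Box_card)
qed

lemma Bv_meas[measurable]: "Bv L u \<in> borel_measurable (PiM UNIV MM)"
proof -
  have fin[measurable]: "finite (Box 0 (ss L u))" by (simp add: Box_finite)
  have "Measurable.pred (PiM UNIV MM) (\<lambda>x. badp L u x)"
    unfolding badp_def by measurable
  then show ?thesis unfolding Bv_def by measurable
qed

lemma tail_L:
  assumes L: "L \<ge> 2" and d: "d' > 0"
  shows "measure (PiM UNIV MM) {\<omega>\<in>space (PiM UNIV MM). (\<Sum>u\<in>Box 1 L. Bv L u \<omega>) \<ge>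
            (\<Sum>u\<in>Box 1 L. integral\<^sup>L (PiM UNIV MM) (Bv L u)) + d' * real L ^ CARD('d)}
         \<le> real (TT L ^ CARD('d)) * exp (- 2 * (d' * real L ^ CARD('d) / real (TT L ^ CARD('d)))\<^sup>2 / real L ^ CARD('d))"
proof -
  interpret P: prob_space "PiM UNIV (MM :: nat \<times> (int ^ 'd) \<Rightarrow> nat measure)" by (rule PM_prob)
  have L1: "L \<ge> 1" using L by simp
  have ci: "card (cls L ` Box 1 L) \<le> TT L ^ CARD('d)" by (rule cls_image[OF L1])
  have dd: "d' * real L ^ CARD('d) > 0" using d L by simp
  have "P.prob {\<omega>\<in>space (PiM UNIV MM). (\<Sum>u\<in>Box 1 L. Bv L u \<omega>) \<ge>
            (\<Sum>u\<in>Box 1 L. P.expectation (Bv L u)) + d' * real L ^ CARD('d)}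
        \<le> real (card (cls L ` Box 1 L)) * exp (- 2 * (d' * real L ^ CARD('d) / real (TT L ^ CARD('d)))\<^sup>2 / real (card (Box (1::int^'d) L)))"
  proof (rule P.hoeffding_classes[OF Box_finite _ _ dd])
    fix C assume "C \<in> cls L ` Box 1 L"
    show "P.indep_vars (\<lambda>_. borel) (Bv L) {u \<in> Box 1 L. cls L u = C}" by (rule indep_class[OF L1])
  next
    fix u \<omega> show "Bv L u \<omega> \<in> {0..1}" by (simp add: Bv_def)
  next
    show "real (card (cls L ` Box 1 L)) \<le> real (TT L ^ CARD('d))" using ci by linarith
  qed
  also have "\<dots> \<le> real (TT L ^ CARD('d)) * exp (- 2 * (d' * real L ^ CARD('d) / real (TT L ^ CARD('d)))\<^sup>2 / real L ^ CARD('d))"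
    unfolding Box_card of_nat_power using ci by (intro mult_right_mono) auto
  finally show ?thesis .
qed

end

context main begin

lemma badp_pred[measurable]: "Measurable.pred (PiM UNIV MM) (badp L u)"
proof -
  have fin[measurable]: "finite (Box 0 (ss L u))" by (simp add: Box_finite)
  show ?thesis unfolding badp_def by measurable
qed

lemma E_Bv: "integral\<^sup>L (PiM UNIV MM) (Bv L u) = measure (PiM UNIV MM) {\<omega>\<in>space (PiM UNIV MM). badp L u \<omega>}"
proof -
  interpret P: prob_space "PiM UNIV (MM :: nat \<times> (int ^ 'd) \<Rightarrow> nat measure)" by (rule PM_prob)
  have S: "{\<omega>\<in>space (PiM UNIV MM). badp L u \<omega>} \<in> P.events" by measurable
  have "integral\<^sup>L (PiM UNIV MM) (Bv L u) = integral\<^sup>L (PiM UNIV MM) (indicator {\<omega>\<in>space (PiM UNIV MM). badp L u \<omega>})"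
    by (intro Bochner_Integration.integral_cong) (auto simp: Bv_def indicator_def)
  also have "\<dots> = measure (PiM UNIV MM) {\<omega>\<in>space (PiM UNIV MM). badp L u \<omega>}"
    by (simp add: Bochner_Integration.integral_indicator Int_absorb2)
  finally show ?thesis .
qed

lemma bc:
  assumes d: "d' > 0"
  shows "AE \<omega> in PiM UNIV MM. eventually (\<lambda>L. (\<Sum>u\<in>Box 1 L. Bv L u \<omega>) <
           (\<Sum>u\<in>Box 1 L. integral\<^sup>L (PiM UNIV MM) (Bv L u)) + d' * real L ^ CARD('d)) sequentially"
proof -
  interpret P: prob_space "PiM UNIV (MM :: nat \<times> (int ^ 'd) \<Rightarrow> nat measure)" by (rule PM_prob)
  define A where "A L = (if L \<ge> 2 then {\<omega>\<in>space (PiM UNIV MM). (\<Sum>u\<in>Box 1 L. Bv L u \<omega>) \<ge>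
            (\<Sum>u\<in>Box 1 L. integral\<^sup>L (PiM UNIV MM) (Bv L u)) + d' * real L ^ CARD('d)} else {})" for L
  have Ameas: "A L \<in> P.events" for L
  proof -
    have fin[measurable]: "finite (Box (1::int^'d) L)" by (simp add: Box_finite)
    have "{\<omega>\<in>space (PiM UNIV MM). (\<Sum>u\<in>Box 1 L. Bv L u \<omega>) \<ge>
            (\<Sum>u\<in>Box 1 L. integral\<^sup>L (PiM UNIV MM) (Bv L u)) + d' * real L ^ CARD('d)} \<in> P.events"
      by measurable
    then show ?thesis by (simp add: A_def)
  qed
  define c :: real where "c = 2 ^ CARD('d)"
  have c0: "c > 0" by (simp add: c_def)
  define W where "W x = c * (ln x / Emin + 1)" for x :: real
  have lim: "((\<lambda>x::real. x^2 * (c * (ln x / Emin + 1) * exp (- 2 * d'^2 * x / (c * (ln x / Emin + 1))^2))) \<longlongrightarrow> 0) at_top"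
    using c0 Emin_pos d by real_asymp
  have lim2: "((\<lambda>n. real n ^ 2 * (W (real n) * exp (- 2 * d'^2 * real n / (W (real n))^2))) \<longlongrightarrow> 0) sequentially"
    unfolding W_def by (rule filterlim_compose[OF lim filterlim_real_sequentially])
  have ev: "eventually (\<lambda>n. real n ^ 2 * (W (real n) * exp (- 2 * d'^2 * real n / (W (real n))^2)) < 1) sequentially"
    using order_tendstoD(2)[OF lim2] by simp
  have bound: "norm (measure (PiM UNIV MM) (A n)) \<le> inverse (real n ^ 2)" if n2: "n \<ge> 2"
    and nb: "real n ^ 2 * (W (real n) * exp (- 2 * d'^2 * real n / (W (real n))^2)) < 1" for n
  proof -
    have n1: "n \<ge> 1" using n2 by simp
    define T where "T = real (TT n ^ CARD('d))"
    define X where "X = real n ^ CARD('d)"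
    have T0: "T > 0" by (simp add: T_def TT_def)
    have TW: "T \<le> W (real n)" using TT_bounds(2)[OF n1] by (simp add: T_def W_def c_def)
    have Xn: "X \<ge> real n" unfolding X_def using n1 by (metis One_nat_def Suc_leI of_nat_1 of_nat_le_iff
          self_le_power zero_less_card_finite power_one_right)
    have X0: "X > 0" using n1 by (simp add: X_def)
    have "measure (PiM UNIV MM) (A n) \<le> T * exp (- 2 * (d' * X / T)\<^sup>2 / X)"
      using tail_L[OF n2 d] n2 by (simp add: A_def T_def X_def)
    also have "\<dots> \<le> W (real n) * exp (- 2 * d'^2 * real n / (W (real n))^2)"
    proof (rule mult_mono)
      show "T \<le> W (real n)" by (rule TW)
      have "2 * d'^2 * real n / (W (real n))^2 \<le> 2 * d'^2 * X / T^2"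
      proof (rule frac_le)
        show "2 * d'^2 * real n \<le> 2 * d'^2 * X" using Xn by (simp add: mult_left_mono)
        show "0 < T^2" using T0 by simp
        show "T^2 \<le> (W (real n))^2" using TW T0 by (intro power_mono) auto
      qed (use d X0 in auto)
      also have "2 * d'^2 * X / T^2 = 2 * (d' * X / T)\<^sup>2 / X" using X0 T0 by (simp add: field_simps power2_eq_square)
      finally show "exp (- 2 * (d' * X / T)\<^sup>2 / X) \<le> exp (- 2 * d'^2 * real n / (W (real n))^2)" by simp
    qed (use T0 TW in auto)
    also have "\<dots> \<le> inverse (real n ^ 2)"
    proof -
      have p: "real n ^ 2 > 0" using n1 by simp
      then show ?thesis using nb by (simp add: field_simps)
    qed
    finally show ?thesis by simp
  qed
  have summ: "summable (\<lambda>n. measure (PiM UNIV MM) (A n))"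
  proof (rule summable_comparison_test_ev[OF _ inverse_power_summable[of 2]])
    show "eventually (\<lambda>n. norm (measure (PiM UNIV MM) (A n)) \<le> inverse (real n ^ 2)) sequentially"
      using ev eventually_ge_at_top[of 2] by eventually_elim (rule bound)
  qed simp
  have "AE \<omega> in PiM UNIV MM. eventually (\<lambda>n. \<omega> \<in> space (PiM UNIV MM) - A n) sequentially"
    by (rule borel_cantelli_AE1[OF Ameas _ summ]) (simp add: P.emeasure_finite less_top[symmetric])
  then show ?thesis
  proof (rule eventually_mono)
    fix \<omega> assume "eventually (\<lambda>n. \<omega> \<in> space (PiM UNIV MM) - A n) sequentially"
    then show "eventually (\<lambda>L. (\<Sum>u\<in>Box 1 L. Bv L u \<omega>) <
           (\<Sum>u\<in>Box 1 L. integral\<^sup>L (PiM UNIV MM) (Bv L u)) + d' * real L ^ CARD('d)) sequentially"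
      using eventually_ge_at_top[of 2] by eventually_elim (auto simp: A_def not_le)
  qed
qed

end

context main begin

lemma seq_lim:
  fixes f :: "real \<Rightarrow> real"
  assumes "(f \<longlongrightarrow> 0) at_top" "e > 0"
  shows "eventually (\<lambda>n. f (real n) < e) sequentially"
proof -
  have "((\<lambda>n. f (real n)) \<longlongrightarrow> 0) sequentially"
    by (rule filterlim_compose[OF assms(1) filterlim_real_sequentially])
  from order_tendstoD(2)[OF this assms(2)] show ?thesis .
qed

lemma det_part:
  assumes H: "\<forall>k::nat. eventually (\<lambda>L. (\<Sum>u\<in>Box 1 L. Bv L u \<omega>) <
           (\<Sum>u\<in>Box 1 L. integral\<^sup>L (PiM UNIV MM) (Bv L u)) + inverse (real (Suc k)) * real L ^ CARD('d)) sequentially"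
  shows "(\<lambda>L. real (card {u \<in> Box 1 L. Rrec L u (\<lambda>n. \<omega> (L, n))
        \<le> ereal (root CARD('d) (ln (real L) * (1 - \<epsilon>) / Ent bos \<beta> \<theta> \<mu> L u))}) / real L ^ CARD('d)) \<longlonglongrightarrow> 0"
proof -
  define cnt where "cnt L = real (card {u \<in> Box 1 L. Rrec L u (\<lambda>n. \<omega> (L, n))
      \<le> ereal (root CARD('d) (ln (real L) * (1 - \<epsilon>) / Ent bos \<beta> \<theta> \<mu> L u))})" for L
  have cnt_tt: "cnt L = real (card {u \<in> Box 1 L. Rrec L u (\<lambda>n. \<omega> (L, n)) \<le> ereal (tt L u)})" for L
    by (simp add: cnt_def tt_def)
  show ?thesis
    unfolding cnt_def[symmetric]
    unfolding tendsto_iff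
  proof (intro allI impI)
    fix e :: real assume e: "e > 0"
    obtain k where k: "inverse (real (Suc k)) < e / 3" using reals_Archimedean[of "e/3"] e by auto
    have l1: "((\<lambda>x::real. real CARD('d) * (ln x / Emin + 2) / x) \<longlongrightarrow> 0) at_top"
      using Emin_pos by real_asymp
    have l2: "((\<lambda>x::real. real Nr * (ln x / Emin + 2) * exp ((1 - \<epsilon>/4) * ln x) / x) \<longlongrightarrow> 0) at_top"
      using Emin_pos eps by real_asymp
    have l3: "((\<lambda>x::real. 16 * Bc / (Emin * \<epsilon>\<^sup>2 * ln x)) \<longlongrightarrow> 0) at_top"
      using Emin_pos eps by real_asymp
    have md: "min \<delta> 1 > 0" using dpos by simp
    have e3: "e/3 > 0" using e by simp
    note E2 = seq_lim[OF l1 md] and E3 = seq_lim[OF l2 e3] and E4 = seq_lim[OF l3 e3]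
    show "eventually (\<lambda>L. dist (cnt L / real L ^ CARD('d)) 0 < e) sequentially"
      using eventually_ge_at_top[of 2] E2 E3 E4 H[rule_format, of k]
    proof eventually_elim
      case (elim L)
      have L: "L \<ge> 2" and L1: "L \<ge> 1" using elim by auto
      have Lr: "real L \<ge> 1" using L1 by simp
      have X: "real L ^ CARD('d) \<ge> real L" using L1
        by (metis One_nat_def Suc_leI of_nat_1 of_nat_le_iff self_le_power zero_less_card_finite power_one_right)
      have X0: "real L ^ CARD('d) > 0" using L1 by simp
      have TT1: "real (TT L) \<le> ln (real L) / Emin + 2" by (rule TT_bounds(1)[OF L1])
      have lnL: "ln (real L) \<ge> 0" using Lr by simp
      have Lg: "real CARD('d) * real (TT L) / real L < min \<delta> 1"
      proof -
        have "real CARD('d) * real (TT L) / real L \<le> real CARD('d) * (ln (real L) / Emin + 2) / real L"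
          using TT1 Lr by (intro divide_right_mono mult_left_mono) auto
        then show ?thesis using elim by linarith
      qed
      define g1 where "g1 = real (Nr * TT L) * exp ((1 - \<epsilon>/4) * ln (real L))"
      have g1: "g1 / real L ^ CARD('d) < e / 3"
      proof -
        have "g1 / real L ^ CARD('d) \<le> g1 / real L"
          using X Lr by (intro divide_left_mono) (auto simp: g1_def)
        also have "\<dots> \<le> real Nr * (ln (real L) / Emin + 2) * exp ((1 - \<epsilon>/4) * ln (real L)) / real L"
          unfolding g1_def using TT1 Lr by (intro divide_right_mono mult_right_mono) (auto intro: mult_left_mono)
        finally show ?thesis using elim by linarith
      qed
      have cb: "cnt L \<le> g1 + real (card {u \<in> Box 1 L. badp L u \<omega>})"
        unfolding cnt_tt g1_def by (rule count_bound[OF L])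
      have cbad: "real (card {u \<in> Box 1 L. badp L u \<omega>}) = (\<Sum>u\<in>Box 1 L. Bv L u \<omega>)"
      proof -
        have "(\<Sum>u\<in>Box 1 L. Bv L u \<omega>) = (\<Sum>u\<in>{u \<in> Box 1 L. badp L u \<omega>}. 1)"
          unfolding Bv_def by (simp add: sum.If_cases Box_finite Int_def)
        then show ?thesis by simp
      qed
      have sE: "(\<Sum>u\<in>Box 1 L. integral\<^sup>L (PiM UNIV MM) (Bv L u)) \<le> real L ^ CARD('d) * rho L"
      proof -
        have "(\<Sum>u\<in>Box 1 L. integral\<^sup>L (PiM UNIV MM) (Bv L u)) \<le> (\<Sum>u\<in>Box (1::int^'d) L. rho L)"
          by (rule sum_mono) (simp add: E_Bv bad_prob_main[OF _ L Lg])
        also have "\<dots> = real L ^ CARD('d) * rho L" by (simp add: Box_card)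
        finally show ?thesis .
      qed
      have "cnt L < g1 + real L ^ CARD('d) * rho L + inverse (real (Suc k)) * real L ^ CARD('d)"
        using cb cbad sE elim by linarith
      then have "cnt L / real L ^ CARD('d) < (g1 + real L ^ CARD('d) * rho L + inverse (real (Suc k)) * real L ^ CARD('d)) / real L ^ CARD('d)"
        using X0 by (simp add: divide_strict_right_mono)
      also have "\<dots> = g1 / real L ^ CARD('d) + rho L + inverse (real (Suc k))"
        using X0 by (simp add: field_simps)
      also have "\<dots> < e"
      proof -
        have r: "rho L < e/3" unfolding rho_def using elim by linarith
        show ?thesis using g1 k r by linarith
      qed
      finally have lt: "cnt L / real L ^ CARD('d) < e" .
      have "cnt L \<ge> 0" by (simp add: cnt_def)
      then have "cnt L / real L ^ CARD('d) \<ge> 0" using X0 by simp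
      then show ?case using lt by (simp add: dist_real_def)
    qed
  qed
qed

lemma main_AE:
  "AE \<omega> in (PiM UNIV MM :: (nat \<times> (int ^ 'd) \<Rightarrow> nat) measure). (\<lambda>L. real (card {u \<in> Box 1 L. Rrec L u (\<lambda>n. \<omega> (L, n))
        \<le> ereal (root CARD('d) (ln (real L) * (1 - \<epsilon>) / Ent bos \<beta> \<theta> \<mu> L u))}) / real L ^ CARD('d)) \<longlonglongrightarrow> 0"
proof -
  interpret P: prob_space "PiM UNIV (MM :: nat \<times> (int ^ 'd) \<Rightarrow> nat measure)" by (rule PM_prob)
  have "AE \<omega> in PiM UNIV MM. \<forall>k::nat. eventually (\<lambda>L. (\<Sum>u\<in>Box 1 L. Bv L u \<omega>) <
           (\<Sum>u\<in>Box 1 L. integral\<^sup>L (PiM UNIV MM) (Bv L u)) + inverse (real (Suc k)) * real L ^ CARD('d)) sequentially"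
    unfolding AE_all_countable by (intro allI bc) simp
  then show ?thesis
    by (rule eventually_mono) (rule det_part)
qed

end

theorem lemma1:
  fixes \<theta> :: "real \<Rightarrow> real" and \<beta> \<mu> \<epsilon> :: real and bos :: bool
  assumes "\<beta> > 0"
    and "continuous_on {0..} \<theta>"
    and "\<forall>x\<ge>0. \<theta> x \<ge> 0"
    and "\<forall>x>0. \<theta> x > 0"
    and "bos \<Longrightarrow> \<mu> > 0"
    and "(\<integral>\<^sup>+ y. ennreal (hdens bos \<beta> \<theta> \<mu> (norm (y :: real ^ 'd))) \<partial>lborel) < \<infinity>"
    and "\<epsilon> > 0"
  shows "AE \<omega> in (Pmodel bos \<beta> \<theta> \<mu> :: (nat \<times> (int ^ 'd) \<Rightarrow> nat) measure).
           (\<lambda>L. real (card {u \<in> Box 1 L.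
                   Rrec L u (\<lambda>n. \<omega> (L, n))
                     \<le> ereal (root CARD('d) (ln (real L) * (1 - \<epsilon>) / Ent bos \<beta> \<theta> \<mu> L u))})
                 / real L ^ CARD('d)) \<longlonglongrightarrow> 0"
proof -
  interpret S: setting bos \<beta> \<mu> \<theta>
    by unfold_locales (use assms in auto)
  show ?thesis
  proof (cases "\<epsilon> < 1")
    case False
    have notle: "\<not> (Rrec L u k \<le> ereal (root CARD('d) (ln (real L) * (1 - \<epsilon>) / Ent bos \<beta> \<theta> \<mu> L u)))"
      for L and u :: "int ^ 'd" and k
    proof
      assume a: "Rrec L u k \<le> ereal (root CARD('d) (ln (real L) * (1 - \<epsilon>) / Ent bos \<beta> \<theta> \<mu> L u))"
      obtain s where s: "1 \<le> s" "real s \<le> root CARD('d) (ln (real L) * (1 - \<epsilon>) / Ent bos \<beta> \<theta> \<mu> L u)"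
        using Rrec_le_unique[OF a] by blast
      have E: "Ent bos \<beta> \<theta> \<mu> L u \<ge> 0"
      proof -
        have "lat_norm u / real L \<ge> 0" by (simp add: lat_norm_nonneg)
        then have "S.gq (lat_norm u / real L) > 0 \<and> qdom bos (S.gq (lat_norm u / real L))"
          using S.gq_pos S.gq_qdom by blast
        then show ?thesis using S.Aq_pos by (simp add: S.Ent_eq less_imp_le)
      qed
      have lnL: "ln (real L) \<ge> 0" by (cases "L = 0") auto
      have "ln (real L) * (1 - \<epsilon>) \<le> 0" using lnL False by (simp add: mult_nonneg_nonpos)
      then have "ln (real L) * (1 - \<epsilon>) / Ent bos \<beta> \<theta> \<mu> L u \<le> 0" using E by (simp add: divide_nonpos_nonneg)
      then have "root CARD('d) (ln (real L) * (1 - \<epsilon>) / Ent bos \<beta> \<theta> \<mu> L u) \<le> 0"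
        using real_root_le_0_iff[of "CARD('d)"] by simp
      moreover have "real s \<ge> 1" using s(1) by simp
      ultimately show False using s(2) by linarith
    qed
    have emp: "{u \<in> Box 1 L. Rrec L u (\<lambda>n. \<omega> (L, n))
                     \<le> ereal (root CARD('d) (ln (real L) * (1 - \<epsilon>) / Ent bos \<beta> \<theta> \<mu> L u))} = ({} :: (int ^ 'd) set)"
      for L \<omega> using notle by blast
    show ?thesis unfolding emp by simp
  next
    case True
    define R1 where "R1 = 2 * real CARD('d) + 1"
    have R10: "R1 \<ge> 0" by (simp add: R1_def)
    obtain Emin where Emin: "Emin > 0" "\<forall>r\<in>{0..R1}. Aq bos (S.gq r) (S.gq r) \<ge> Emin"
      using S.Emin_ex[OF R10] by blast
    obtain B where B: "\<forall>r1\<in>{0..R1}. \<forall>r2\<in>{0..R1}. (bb (S.gq r1))\<^sup>2 * VV bos (S.gq r2) \<le> B"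
      using S.Bmax2_ex by blast
    have eta: "\<epsilon> * Emin / 4 > 0" using assms(7) Emin(1) by simp
    obtain \<delta> where d: "\<delta> > 0" "\<forall>r1\<in>{0..R1}. \<forall>r2\<in>{0..R1}. \<forall>r\<in>{0..R1}. \<bar>r1 - r\<bar> < \<delta> \<longrightarrow> \<bar>r2 - r\<bar> < \<delta> \<longrightarrow>
        Aq bos (S.gq r1) (S.gq r2) \<le> Aq bos (S.gq r) (S.gq r) + \<epsilon> * Emin / 4"
      using S.unif_Ar[OF eta, of R1] by blast
    interpret M: main bos \<beta> \<mu> \<theta> "TYPE('d)" \<epsilon> Emin "max B 0" \<delta> R1
    proof unfold_locales
      show "0 < \<epsilon>" "\<epsilon> < 1" "0 < Emin" "0 \<le> max B 0" "0 < \<delta>" using assms(7) True Emin(1) d(1) by auto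
      show "2 * real CARD('d) + 1 \<le> R1" by (simp add: R1_def)
      show "Emin \<le> Aq bos (S.gq r) (S.gq r)" if "r \<in> {0..R1}" for r using Emin(2) that by blast
      show "(bb (S.gq r1))\<^sup>2 * VV bos (S.gq r2) \<le> max B 0" if "r1 \<in> {0..R1}" "r2 \<in> {0..R1}" for r1 r2
        using B that by force
      show "Aq bos (S.gq r1) (S.gq r2) \<le> Aq bos (S.gq r) (S.gq r) + \<epsilon> * Emin / 4"
        if "r1 \<in> {0..R1}" "r2 \<in> {0..R1}" "r \<in> {0..R1}" "\<bar>r1 - r\<bar> < \<delta>" "\<bar>r2 - r\<bar> < \<delta>" for r1 r2 r
        using d(2) that by blast
    qed
    show ?thesis unfolding S.PM_eq by (rule M.main_AE)
  qed
qed

end
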